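(* Let $\mathfrak{g}$ be a Lie algebra with structure constants $c^\alpha_{\beta\gamma}$ in a basis $\{e_\alpha\}$. Suppose that an $\mathrm{End}(\mathfrak{g})$-valued vector field $\xi^\alpha_\beta{}^j$ on Minkowski space satisfies \[\partial^{(i}\xi^{|\alpha|}_\beta{}^{j)}=\eta^{ij}k^\alpha_\beta,\qquad \xi^\alpha_\beta{}^jc^\beta_{\gamma\delta}+c^\alpha_{\beta\gamma}\xi^\beta_\delta{}^j=0\] for some functions $k^\alpha_\beta$. Then $Q^\alpha_i=\xi^\alpha_\beta{}^jF^\beta_{ij}$ are the components of a first order generalized symmetry of the Yang-Mills equations.
   Context: Minkowski space has coordinates $x^i$, $i=0,\dots,3$, metric $\eta=\mathrm{diag}(-1,1,1,1)$ (used to raise/lower indices); round brackets denote symmetrization, with $|\alpha|$ excluded. $[e_\beta,e_\gamma]=c^\alpha_{\beta\gamma}e_\alpha$. Jet coordinates $x^i,a^\alpha_i,a^\alpha_{i,j_1},\dots$ for $\mathfrak{g}$-valued potentials $a^\alpha_i$; differential functions are smooth functions of finitely many jet coordinates; $D_i$ is the total derivative; $\nabla_iG^\alpha=D_iG^\alpha+c^\alpha_{\beta\gamma}a^\beta_iG^\gamma$; $[G,H]^\alpha=c^\alpha_{\beta\gamma}G^\beta H^\gamma$. Field tensor $F^\alpha_{ij}=a^\alpha_{j,i}-a^\alpha_{i,j}+c^\alpha_{\beta\gamma}a^\beta_ia^\gamma_j$; Yang-Mills equations $\nabla^jF_{ij}=0$, with $p$-fold prolonged solution manifold $\mathcal R^p$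 defined by $\nabla_{i_1}\cdots\nabla_{i_r}\nabla^jF_{i_{r+1}j}=0$, $0\le r\le p$. A generalized symmetry of order $p$ is a collection of $\mathfrak{g}$-valued differential functions $Q^\alpha_i$ of order $p$ with $\nabla^j\nabla_iQ_j-\nabla^j\nabla_jQ_i-[F_i{}^j,Q_j]=0$ on $\mathcal R^p$. *)

theory Defs
  imports "HOL-Analysis.Analysis" "HOL-Library.Multiset"
begin

text \<open>Jet variables: X i = x^i ; A a i J = a^a_{i,J} with J a multiset of
  derivative indices (symmetric in the derivative indices).\<close>

datatype 'g jvar = X 4 | A 'g 4 "4 multiset"

type_synonym 'g jpt = "'g jvar \<Rightarrow> real"
type_synonym 'g dfun = "'g jpt \<Rightarrow> real"

text \<open>Minkowski metric diag(-1,1,1,1) (its own inverse).\<close>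
definition eta :: "4 \<Rightarrow> 4 \<Rightarrow> real" where
  "eta i j = (if i = j then (if i = 0 then -1 else 1) else 0)"

text \<open>c a b d = c^a_{bd}: structure constants of a real Lie algebra.\<close>
definition lie_structure :: "('g::finite \<Rightarrow> 'g \<Rightarrow> 'g \<Rightarrow> real) \<Rightarrow> bool" where
  "lie_structure c \<longleftrightarrow> (\<forall>a b d. c a b d = - c a d b) \<and>
     (\<forall>a b d e. (\<Sum>f\<in>UNIV. c a b f * c f d e + c a d f * c f e b + c a e f * c f b d) = 0)"

fun vord :: "'g jvar \<Rightarrow> nat" where
  "vord (X _) = 0"
| "vord (A _ _ J) = size J"

definition pdv :: "'g jvar \<Rightarrow> 'g dfun \<Rightarrow> 'g dfun" where
  "pdv v f p = deriv (\<lambda>t. f (p(v := t))) (p v)"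

fun iterpd :: "'g jvar list \<Rightarrow> 'g dfun \<Rightarrow> 'g dfun" where
  "iterpd [] f = f"
| "iterpd (v # ws) f = pdv v (iterpd ws f)"

definition smooth_jet :: "'g dfun \<Rightarrow> bool" where
  "smooth_jet f \<longleftrightarrow> (\<forall>ws. continuous_on UNIV (iterpd ws f) \<and>
      (\<forall>v p. (\<lambda>t. iterpd ws f (p(v := t))) differentiable (at (p v))))"

definition diff_fun :: "nat \<Rightarrow> 'g dfun \<Rightarrow> bool" where
  "diff_fun n f \<longleftrightarrow>
     (\<exists>S. finite S \<and> (\<forall>v\<in>S. vord v \<le> n) \<and> (\<forall>p q. (\<forall>v\<in>S. p v = q v) \<longrightarrow> f p = f q))
     \<and> smooth_jet f"

fun is_avar :: "'g jvar \<Rightarrow> bool" where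
  "is_avar (X _) = False"
| "is_avar (A _ _ _) = True"

fun shiftv :: "4 \<Rightarrow> 'g jvar \<Rightarrow> 'g jvar" where
  "shiftv i (X k) = X k"
| "shiftv i (A a k J) = A a k (J + {#i#})"

text \<open>Total derivative D_i = d/dx^i + sum a^a_{k,Ji} d/da^a_{k,J}
  (only finitely many nonzero terms for a differential function).\<close>
definition totD :: "4 \<Rightarrow> 'g dfun \<Rightarrow> 'g dfun" where
  "totD i f p = pdv (X i) f p +
     (\<Sum>v\<in>{v. is_avar v \<and> pdv v f p \<noteq> 0}. p (shiftv i v) * pdv v f p)"

definition Fld :: "('g::finite \<Rightarrow> 'g \<Rightarrow> 'g \<Rightarrow> real) \<Rightarrow> 'g \<Rightarrow> 4 \<Rightarrow> 4 \<Rightarrow> 'g dfun" where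
  "Fld c a i j p = p (A a j {#i#}) - p (A a i {#j#})
     + (\<Sum>b\<in>UNIV. \<Sum>d\<in>UNIV. c a b d * p (A b i {#}) * p (A d j {#}))"

definition cov :: "('g::finite \<Rightarrow> 'g \<Rightarrow> 'g \<Rightarrow> real) \<Rightarrow> 4 \<Rightarrow> ('g \<Rightarrow> 'g dfun) \<Rightarrow> ('g \<Rightarrow> 'g dfun)" where
  "cov c i G a p = totD i (G a) p + (\<Sum>b\<in>UNIV. \<Sum>d\<in>UNIV. c a b d * p (A b i {#}) * G d p)"

fun covs :: "('g::finite \<Rightarrow> 'g \<Rightarrow> 'g \<Rightarrow> real) \<Rightarrow> 4 list \<Rightarrow> ('g \<Rightarrow> 'g dfun) \<Rightarrow> ('g \<Rightarrow> 'g dfun)" where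
  "covs c [] G = G"
| "covs c (i # is) G = cov c i (covs c is G)"

definition YM :: "('g::finite \<Rightarrow> 'g \<Rightarrow> 'g \<Rightarrow> real) \<Rightarrow> 4 \<Rightarrow> 'g \<Rightarrow> 'g dfun" where
  "YM c i a p = (\<Sum>j\<in>UNIV. eta j j * cov c j (\<lambda>b. Fld c b i j) a p)"

definition onR :: "('g::finite \<Rightarrow> 'g \<Rightarrow> 'g \<Rightarrow> real) \<Rightarrow> nat \<Rightarrow> 'g jpt \<Rightarrow> bool" where
  "onR c n p \<longleftrightarrow> (\<forall>is i a. length is \<le> n \<longrightarrow> covs c is (YM c i) a p = 0)"

text \<open>Generalized symmetry of order n: Q i a = Q^a_i.\<close>
definition gen_symmetry :: "('g::finite \<Rightarrow> 'g \<Rightarrow> 'g \<Rightarrow> real) \<Rightarrow> nat \<Rightarrow> (4 \<Rightarrow> 'g \<Rightarrow> 'g dfun) \<Rightarrow> bool" where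
  "gen_symmetry c n Q \<longleftrightarrow> (\<forall>i a. diff_fun n (Q i a)) \<and>
     (\<forall>p. onR c n p \<longrightarrow> (\<forall>i a.
        (\<Sum>j\<in>UNIV. eta j j * (cov c j (cov c i (Q j)) a p - cov c j (cov c j (Q i)) a p))
        - (\<Sum>j\<in>UNIV. \<Sum>b\<in>UNIV. \<Sum>d\<in>UNIV. c a b d * (eta j j * Fld c b i j p) * Q j d p) = 0))"

definition pdx :: "4 \<Rightarrow> (real^4 \<Rightarrow> real) \<Rightarrow> real^4 \<Rightarrow> real" where
  "pdx i g x = deriv (\<lambda>t. g (x + t *\<^sub>R axis i 1)) 0"

fun ipdx :: "4 list \<Rightarrow> (real^4 \<Rightarrow> real) \<Rightarrow> real^4 \<Rightarrow> real" where
  "ipdx [] g = g"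
| "ipdx (i # is) g = pdx i (ipdx is g)"

definition smooth4 :: "(real^4 \<Rightarrow> real) \<Rightarrow> bool" where
  "smooth4 g \<longleftrightarrow> (\<forall>is x. ipdx is g differentiable (at x))"

end

theory Submission
  imports Defs
begin

abbreviation xp :: "'g jpt \<Rightarrow> real^4" where "xp p \<equiv> (\<chi> l. p (X l))"

section \<open>Partial derivatives on Minkowski space\<close>

lemma pdx_hasderiv:
  assumes "\<forall>y. g differentiable at y"
  shows "((\<lambda>t. g (y + (t - t0) *\<^sub>R axis i 1)) has_real_derivative pdx i g y) (at t0)"
proof -
  obtain g' where g': "(g has_derivative g') (at y)" using assms differentiable_def by blast
  have lin: "linear g'" using g' has_derivative_linear by blast
  have h1: "((\<lambda>t. y + (t - t0) *\<^sub>R axis i 1) has_derivative (\<lambda>h. h *\<^sub>R axis i (1::real))) (at t)" for t t0 :: real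
    by (auto intro!: derivative_eq_intros)
  have h2: "((\<lambda>t. g (y + (t - t0) *\<^sub>R axis i 1)) has_real_derivative g' (axis i 1)) (at t0)" for t0
  proof -
    have "(g has_derivative g') (at ((\<lambda>t. y + (t - t0) *\<^sub>R axis i 1) t0))" using g' by simp
    from diff_chain_at[OF h1 this]
    have "((\<lambda>t. g (y + (t - t0) *\<^sub>R axis i 1)) has_derivative (\<lambda>h. g' (h *\<^sub>R axis i 1))) (at t0)"
      by (simp add: o_def)
    moreover have "(\<lambda>h. g' (h *\<^sub>R axis i 1)) = (*) (g' (axis i 1))"
      using lin by (auto simp: linear_scale)
    ultimately show ?thesis by (simp add: has_field_derivative_def)
  qed
  have "pdx i g y = g' (axis i 1)"
    unfolding pdx_def using h2[of 0] by (auto intro!: DERIV_imp_deriv)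
  then show ?thesis using h2 by simp
qed

lemma pdx_hasderiv0:
  assumes "\<forall>y. g differentiable at y"
  shows "((\<lambda>t. g (y + t *\<^sub>R axis i 1)) has_real_derivative pdx i g y) (at 0)"
  using pdx_hasderiv[OF assms, of y 0 i] by simp

lemma ipdx_snoc: "ipdx (is @ [i]) g = ipdx is (pdx i g)"
  by (induction "is") auto

lemma smooth4_pdx: "smooth4 g \<Longrightarrow> smooth4 (pdx i g)"
  unfolding smooth4_def by (metis ipdx_snoc)

lemma smooth4_diff: "smooth4 g \<Longrightarrow> g differentiable at y"
  unfolding smooth4_def by (metis ipdx.simps(1))

lemma smooth4_cont: "smooth4 g \<Longrightarrow> continuous_on UNIV g"
  by (meson continuous_at_imp_continuous_on differentiable_imp_continuous_within smooth4_diff)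

lemma pdx_lin:
  assumes "\<forall>s\<in>T. \<forall>y. f s differentiable at y" "finite T"
  shows "pdx i (\<lambda>x. \<Sum>s\<in>T. r s * f s x) y = (\<Sum>s\<in>T. r s * pdx i (f s) y)"
proof -
  have "((\<lambda>t. \<Sum>s\<in>T. r s * f s (y + t *\<^sub>R axis i 1)) has_real_derivative (\<Sum>s\<in>T. r s * pdx i (f s) y)) (at 0)"
    using assms by (intro DERIV_sum DERIV_cmult pdx_hasderiv0) auto
  then show ?thesis unfolding pdx_def by (rule DERIV_imp_deriv)
qed

section \<open>Clairaut\<close>

lemma abs_aux: "\<bar>A - a\<bar> < \<bar>a - b\<bar> / 2 \<Longrightarrow> \<bar>B - b\<bar> < \<bar>a - b\<bar> / 2 \<Longrightarrow> A = B \<Longrightarrow> False" for A a B b :: real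
  by (simp add: abs_if split: if_split_asm)

lemma pdx_hasderiv_gen:
  assumes "\<forall>y. g differentiable at y"
  shows "((\<lambda>s. g (z + s *\<^sub>R axis i 1)) has_real_derivative pdx i g (z + s0 *\<^sub>R axis i 1)) (at s0)"
proof -
  have "((\<lambda>t. g ((z + s0 *\<^sub>R axis i 1) + (t - s0) *\<^sub>R axis i 1)) has_real_derivative pdx i g (z + s0 *\<^sub>R axis i 1)) (at s0)"
    by (rule pdx_hasderiv[OF assms])
  moreover have "(\<lambda>t. g ((z + s0 *\<^sub>R axis i 1) + (t - s0) *\<^sub>R axis i 1)) = (\<lambda>s. g (z + s *\<^sub>R axis i 1))"
    by (rule ext) (simp add: algebra_simps)
  ultimately show ?thesis by simp
qed

lemma clairaut_aux:
  assumes g: "smooth4 g" and h: "h > 0"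
  shows "\<exists>s t. \<bar>s\<bar> \<le> h \<and> \<bar>t\<bar> \<le> h \<and>
     g (x + h *\<^sub>R axis i 1 + h *\<^sub>R axis j 1) - g (x + h *\<^sub>R axis i 1) - g (x + h *\<^sub>R axis j 1) + g x
     = h * h * pdx j (pdx i g) (x + s *\<^sub>R axis i 1 + t *\<^sub>R axis j 1)"
proof -
  let ?ei = "axis i (1::real)" and ?ej = "axis j (1::real)"
  have gd: "\<forall>y. g differentiable at y" using g smooth4_diff by blast
  have gid: "\<forall>y. pdx i g differentiable at y" using g smooth4_pdx smooth4_diff by blast
  define u where "u s = g (x + h *\<^sub>R ?ej + s *\<^sub>R ?ei) - g (x + s *\<^sub>R ?ei)" for s
  have ud: "(u has_real_derivative (pdx i g (x + h *\<^sub>R ?ej + s *\<^sub>R ?ei) - pdx i g (x + s *\<^sub>R ?ei))) (at s)" for s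
    unfolding u_def[abs_def]
    by (intro DERIV_diff pdx_hasderiv_gen[OF gd])
  obtain s where s: "0 < s" "s < h" and us: "u h - u 0 = (h - 0) * (pdx i g (x + h *\<^sub>R ?ej + s *\<^sub>R ?ei) - pdx i g (x + s *\<^sub>R ?ei))"
    using MVT2[OF h, of u "\<lambda>s. pdx i g (x + h *\<^sub>R ?ej + s *\<^sub>R ?ei) - pdx i g (x + s *\<^sub>R ?ei)"] ud by blast
  define v where "v t = pdx i g (x + s *\<^sub>R ?ei + t *\<^sub>R ?ej)" for t
  have vd: "(v has_real_derivative pdx j (pdx i g) (x + s *\<^sub>R ?ei + t *\<^sub>R ?ej)) (at t)" for t
    unfolding v_def[abs_def] by (rule pdx_hasderiv_gen[OF gid])
  obtain t where t: "0 < t" "t < h" and vt: "v h - v 0 = (h - 0) * pdx j (pdx i g) (x + s *\<^sub>R ?ei + t *\<^sub>R ?ej)"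
    using MVT2[OF h, of v "\<lambda>t. pdx j (pdx i g) (x + s *\<^sub>R ?ei + t *\<^sub>R ?ej)"] vd by blast
  have "v h - v 0 = pdx i g (x + h *\<^sub>R ?ej + s *\<^sub>R ?ei) - pdx i g (x + s *\<^sub>R ?ei)"
    unfolding v_def by (simp add: algebra_simps)
  then have "u h - u 0 = h * h * pdx j (pdx i g) (x + s *\<^sub>R ?ei + t *\<^sub>R ?ej)"
    using us vt by simp
  moreover have "u h - u 0 = g (x + h *\<^sub>R ?ei + h *\<^sub>R ?ej) - g (x + h *\<^sub>R ?ei) - g (x + h *\<^sub>R ?ej) + g x"
    unfolding u_def by (simp add: algebra_simps)
  ultimately show ?thesis using s t by (intro exI[of _ s] exI[of _ t]) auto
qed

lemma clairaut:
  assumes g: "smooth4 g"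
  shows "pdx j (pdx i g) x = pdx i (pdx j g) x"
proof (rule ccontr)
  assume ne: "pdx j (pdx i g) x \<noteq> pdx i (pdx j g) x"
  define e where "e = \<bar>pdx j (pdx i g) x - pdx i (pdx j g) x\<bar> / 2"
  have e: "e > 0" using ne by (simp add: e_def)
  have c1: "continuous (at x) (pdx j (pdx i g))"
    using g smooth4_pdx smooth4_diff differentiable_imp_continuous_within by blast
  have c2: "continuous (at x) (pdx i (pdx j g))"
    using g smooth4_pdx smooth4_diff differentiable_imp_continuous_within by blast
  obtain d1 where d1: "d1 > 0" "\<forall>y. dist y x < d1 \<longrightarrow> dist (pdx j (pdx i g) y) (pdx j (pdx i g) x) < e"
    using c1 e unfolding continuous_at_eps_delta by blast
  obtain d2 where d2: "d2 > 0" "\<forall>y. dist y x < d2 \<longrightarrow> dist (pdx i (pdx j g) y) (pdx i (pdx j g) x) < e"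
    using c2 e unfolding continuous_at_eps_delta by blast
  define h where "h = min d1 d2 / 4"
  have h: "h > 0" using d1 d2 by (simp add: h_def)
  obtain s t where st: "\<bar>s\<bar> \<le> h" "\<bar>t\<bar> \<le> h" and
    E1: "g (x + h *\<^sub>R axis i 1 + h *\<^sub>R axis j 1) - g (x + h *\<^sub>R axis i 1) - g (x + h *\<^sub>R axis j 1) + g x
     = h * h * pdx j (pdx i g) (x + s *\<^sub>R axis i 1 + t *\<^sub>R axis j 1)"
    using clairaut_aux[OF g h, of x i j] by blast
  obtain s' t' where st': "\<bar>s'\<bar> \<le> h" "\<bar>t'\<bar> \<le> h" and
    E2: "g (x + h *\<^sub>R axis j 1 + h *\<^sub>R axis i 1) - g (x + h *\<^sub>R axis j 1) - g (x + h *\<^sub>R axis i 1) + g x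
     = h * h * pdx i (pdx j g) (x + s' *\<^sub>R axis j 1 + t' *\<^sub>R axis i 1)"
    using clairaut_aux[OF g h, of x j i] by blast
  have "h * h * pdx j (pdx i g) (x + s *\<^sub>R axis i 1 + t *\<^sub>R axis j 1) = h * h * pdx i (pdx j g) (x + s' *\<^sub>R axis j 1 + t' *\<^sub>R axis i 1)"
    using E1 E2 by (simp add: algebra_simps)
  then have eq: "pdx j (pdx i g) (x + s *\<^sub>R axis i 1 + t *\<^sub>R axis j 1) = pdx i (pdx j g) (x + s' *\<^sub>R axis j 1 + t' *\<^sub>R axis i 1)"
    using h by simp
  have nax: "norm (axis k (1::real) :: real^4) = 1" for k by simp
  have "dist (x + s *\<^sub>R axis i 1 + t *\<^sub>R axis j 1) x \<le> \<bar>s\<bar> + \<bar>t\<bar>"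
    unfolding dist_norm using norm_triangle_ineq[of "s *\<^sub>R axis i (1::real)" "t *\<^sub>R axis j (1::real)"]
    by (simp add: nax)
  then have D1: "dist (x + s *\<^sub>R axis i 1 + t *\<^sub>R axis j 1) x < d1" using st d1 d2 h_def by linarith
  have "dist (x + s' *\<^sub>R axis j 1 + t' *\<^sub>R axis i 1) x \<le> \<bar>s'\<bar> + \<bar>t'\<bar>"
    unfolding dist_norm using norm_triangle_ineq[of "s' *\<^sub>R axis j (1::real)" "t' *\<^sub>R axis i (1::real)"]
    by (simp add: nax)
  then have D2: "dist (x + s' *\<^sub>R axis j 1 + t' *\<^sub>R axis i 1) x < d2" using st' d1 d2 h_def by linarith
  have "dist (pdx j (pdx i g) (x + s *\<^sub>R axis i 1 + t *\<^sub>R axis j 1)) (pdx j (pdx i g) x) < e" using d1 D1 by blast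
  moreover have "dist (pdx i (pdx j g) (x + s' *\<^sub>R axis j 1 + t' *\<^sub>R axis i 1)) (pdx i (pdx j g) x) < e" using d2 D2 by blast
  ultimately show False using eq unfolding e_def dist_real_def by (rule abs_aux)
qed

inductive_set nf :: "'g dfun set" where
  nf_const: "(\<lambda>p. r) \<in> nf"
| nf_var: "(\<lambda>p. p v) \<in> nf"
| nf_sm: "smooth4 g \<Longrightarrow> (\<lambda>p. g (xp p)) \<in> nf"
| nf_add: "f \<in> nf \<Longrightarrow> h \<in> nf \<Longrightarrow> (\<lambda>p. f p + h p) \<in> nf"
| nf_mul: "f \<in> nf \<Longrightarrow> h \<in> nf \<Longrightarrow> (\<lambda>p. f p * h p) \<in> nf"

lemma xp_updX: "xp (p(X i := t)) = xp p + (t - p (X i)) *\<^sub>R axis i 1"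
  by (auto simp: vec_eq_iff axis_def)

lemma xp_updA: "is_avar v \<Longrightarrow> xp (p(v := t)) = xp p"
  by (cases v) (auto simp: vec_eq_iff)

lemma sm_deriv:
  assumes "smooth4 g"
  shows "((\<lambda>t. g (xp (p(v := t)))) has_real_derivative (case v of X i \<Rightarrow> pdx i g (xp p) | _ \<Rightarrow> 0)) (at (p v))"
proof (cases v)
  case (X i)
  have gd: "\<forall>y. g differentiable at y" using assms smooth4_diff by blast
  have e: "(\<lambda>t. g (xp (p(X i := t)))) = (\<lambda>t. g (xp p + (t - p (X i)) *\<^sub>R axis i 1))"
    by (simp only: xp_updX)
  show ?thesis using pdx_hasderiv[OF gd, of "xp p" "p (X i)" i] X by (simp only: e jvar.case fun_upd_same)
next
  case (A a k J)
  then show ?thesis by (simp add: xp_updA)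
qed

lemma pdv_eqI: "((\<lambda>t. f (p(v := t))) has_real_derivative D) (at (p v)) \<Longrightarrow> pdv v f p = D"
  unfolding pdv_def by (rule DERIV_imp_deriv)

lemma DERIV_pdv: "((\<lambda>t. f (p(v := t))) has_real_derivative D) (at (p v)) \<Longrightarrow> ((\<lambda>t. f (p(v := t))) has_real_derivative pdv v f p) (at (p v))"
  using pdv_eqI by metis

lemma nf_deriv:
  assumes "f \<in> nf"
  shows "((\<lambda>t. f (p(v := t))) has_real_derivative pdv v f p) (at (p v))"
  using assms
proof (induction arbitrary: p)
  case (nf_const r)
  show ?case by (rule DERIV_pdv[OF DERIV_const])
next
  case (nf_var w)
  have "((\<lambda>t. (p(v := t)) w) has_real_derivative (if v = w then 1 else 0)) (at (p v))"
    by (cases "v = w") auto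
  then show ?case by (rule DERIV_pdv)
next
  case (nf_sm g)
  show ?case using sm_deriv[OF nf_sm] by (rule DERIV_pdv)
next
  case (nf_add f h)
  from DERIV_add[OF nf_add.IH(1)[of p] nf_add.IH(2)[of p]] show ?case by (rule DERIV_pdv)
next
  case (nf_mul f h)
  from DERIV_mult[OF nf_mul.IH(1)[of p] nf_mul.IH(2)[of p]] show ?case by (rule DERIV_pdv)
qed

lemma pdv_const: "pdv v (\<lambda>p. r) p = 0"
  by (rule pdv_eqI) simp

lemma pdv_var: "pdv v (\<lambda>q. q w) p = (if v = w then 1 else 0)"
  by (rule pdv_eqI) (auto)

lemma pdv_add: "f \<in> nf \<Longrightarrow> h \<in> nf \<Longrightarrow> pdv v (\<lambda>p. f p + h p) p = pdv v f p + pdv v h p"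
  by (rule pdv_eqI) (intro DERIV_add nf_deriv)

lemma pdv_mul: "f \<in> nf \<Longrightarrow> h \<in> nf \<Longrightarrow> pdv v (\<lambda>p. f p * h p) p = pdv v f p * h p + f p * pdv v h p"
  apply (rule pdv_eqI)
  using DERIV_mult[OF nf_deriv[of f p v] nf_deriv[of h p v]] by (simp add: mult.commute)

lemma pdv_smX: "smooth4 g \<Longrightarrow> pdv (X i) (\<lambda>p. g (xp p)) p = pdx i g (xp p)"
  by (rule pdv_eqI) (use sm_deriv[of g p "X i"] in simp)

lemma pdv_smA: "smooth4 g \<Longrightarrow> is_avar v \<Longrightarrow> pdv v (\<lambda>p. g (xp p)) p = 0"
  by (rule pdv_eqI) (cases v, auto simp: xp_updA)

lemma nf_pdv: "f \<in> nf \<Longrightarrow> pdv v f \<in> nf"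
proof (induction rule: nf.induct)
  case (nf_const r)
  then show ?case using pdv_const[of v r] nf.nf_const[of 0] by (simp add: fun_eq_iff)
next
  case (nf_var w)
  have "pdv v (\<lambda>p. p w) = (\<lambda>p. if v = w then 1 else 0)" by (simp add: fun_eq_iff pdv_var)
  then show ?case by (simp add: nf.nf_const)
next
  case (nf_sm g)
  show ?case
  proof (cases v)
    case (X i)
    then have "pdv v (\<lambda>p. g (xp p)) = (\<lambda>p. pdx i g (xp p))" by (intro ext) (simp add: pdv_smX[OF nf_sm.hyps])
    then show ?thesis using nf_sm smooth4_pdx nf.nf_sm by metis
  next
    case (A a k J)
    then have "pdv v (\<lambda>p. g (xp p)) = (\<lambda>p. 0)" by (intro ext) (simp add: pdv_smA[OF nf_sm.hyps])
    then show ?thesis by (simp add: nf.nf_const)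
  qed
next
  case (nf_add f h)
  then have "pdv v (\<lambda>p. f p + h p) = (\<lambda>p. pdv v f p + pdv v h p)" by (simp add: fun_eq_iff pdv_add)
  then show ?case using nf_add by (simp add: nf.nf_add)
next
  case (nf_mul f h)
  then have "pdv v (\<lambda>p. f p * h p) = (\<lambda>p. pdv v f p * h p + f p * pdv v h p)" by (simp add: fun_eq_iff pdv_mul)
  then show ?case using nf_mul by (simp add: nf.nf_add nf.nf_mul)
qed

lemma nf_cont: "f \<in> nf \<Longrightarrow> continuous_on UNIV f"
proof (induction rule: nf.induct)
  case (nf_sm g)
  have c1: "continuous_on UNIV (\<lambda>p::'a jpt. xp p)"
    by (intro continuous_on_vec_lambda continuous_on_product_coordinates)
  have c2: "continuous_on UNIV g" using nf_sm smooth4_cont by blast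
  show ?case using continuous_on_compose2[OF c2 c1] by simp
qed (auto intro: continuous_on_add continuous_on_mult continuous_on_product_coordinates)

lemma nf_iterpd: "f \<in> nf \<Longrightarrow> iterpd ws f \<in> nf"
  by (induction ws) (auto intro: nf_pdv)

lemma nf_smooth: "f \<in> nf \<Longrightarrow> smooth_jet f"
  unfolding smooth_jet_def
proof (intro allI conjI)
  fix ws v p assume f: "f \<in> nf"
  show "continuous_on UNIV (iterpd ws f)" using nf_cont nf_iterpd f by blast
  show "(\<lambda>t. iterpd ws f (p(v := t))) differentiable at (p v)"
    using nf_deriv[OF nf_iterpd[OF f]] real_differentiable_def
    by (meson differentiableI has_field_derivative_imp_has_derivative)
qed

definition dep :: "'g jvar set \<Rightarrow> 'g dfun \<Rightarrow> bool" where
  "dep S f \<longleftrightarrow> (\<forall>p q. (\<forall>v\<in>S. p v = q v) \<longrightarrow> f p = f q)"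

lemma dep_mono: "dep S f \<Longrightarrow> S \<subseteq> T \<Longrightarrow> dep T f"
  unfolding dep_def by blast

lemma dep_sm: "dep (range X) (\<lambda>p::'g jpt. g (xp p))"
  unfolding dep_def
proof (intro allI impI)
  fix p q :: "'g jpt" assume "\<forall>v\<in>range X. p v = q v"
  then have "xp p = xp q" by (simp add: vec_eq_iff)
  then show "g (xp p) = g (xp q)" by simp
qed

lemma nf_dep: "f \<in> nf \<Longrightarrow> \<exists>S. finite S \<and> dep S f"
proof (induction rule: nf.induct)
  case (nf_const r)
  then show ?case by (intro exI[of _ "{}"]) (simp add: dep_def)
next
  case (nf_var v)
  then show ?case by (intro exI[of _ "{v}"]) (simp add: dep_def)
next
  case (nf_sm g)
  show ?case using dep_sm[of g] by (intro exI[of _ "range X"]) simp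
next
  case (nf_add f h)
  then obtain S T where "finite S" "dep S f" "finite T" "dep T h" by blast
  then have "dep (S \<union> T) f" "dep (S \<union> T) h" "finite (S \<union> T)" using dep_mono[of S f "S \<union> T"] dep_mono[of T h "S \<union> T"] by auto
  then have "dep (S \<union> T) (\<lambda>p. f p + h p)" "finite (S \<union> T)" unfolding dep_def by metis+
  then show ?case by blast
next
  case (nf_mul f h)
  then obtain S T where "finite S" "dep S f" "finite T" "dep T h" by blast
  then have "dep (S \<union> T) f" "dep (S \<union> T) h" "finite (S \<union> T)" using dep_mono[of S f "S \<union> T"] dep_mono[of T h "S \<union> T"] by auto
  then have "dep (S \<union> T) (\<lambda>p. f p * h p)" "finite (S \<union> T)" unfolding dep_def by metis+
  then show ?case by blast
qed

lemma pdv_out: "dep S f \<Longrightarrow> v \<notin> S \<Longrightarrow> pdv v f p = 0"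
proof -
  assume d: "dep S f" and v: "v \<notin> S"
  have "(\<lambda>t. f (p(v := t))) = (\<lambda>t. f p)"
    using d v unfolding dep_def by (intro ext) (metis fun_upd_other)
  then show ?thesis unfolding pdv_def by simp
qed

lemma totD_formula:
  assumes "finite S" "dep S f"
  shows "totD i f p = pdv (X i) f p + (\<Sum>v\<in>{v\<in>S. is_avar v}. p (shiftv i v) * pdv v f p)"
proof -
  have sub: "{v. is_avar v \<and> pdv v f p \<noteq> 0} \<subseteq> {v\<in>S. is_avar v}"
    using pdv_out[OF assms(2)] by blast
  have "(\<Sum>v\<in>{v. is_avar v \<and> pdv v f p \<noteq> 0}. p (shiftv i v) * pdv v f p)
      = (\<Sum>v\<in>{v\<in>S. is_avar v}. p (shiftv i v) * pdv v f p)"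
    by (rule sum.mono_neutral_left) (use assms(1) sub in auto)
  then show ?thesis unfolding totD_def by simp
qed

lemma nf_sum: "finite T \<Longrightarrow> (\<And>s. s \<in> T \<Longrightarrow> f s \<in> nf) \<Longrightarrow> (\<lambda>p. \<Sum>s\<in>T. f s p) \<in> nf"
proof (induction T rule: finite_induct)
  case empty
  then show ?case using nf_const[of 0] by simp
next
  case (insert x F)
  then show ?case using nf_add[of "f x" "\<lambda>p. \<Sum>s\<in>F. f s p"] by simp
qed

lemma nf_totD: "f \<in> nf \<Longrightarrow> totD i f \<in> nf"
proof -
  assume f: "f \<in> nf"
  then obtain S where S: "finite S" "dep S f" using nf_dep by blast
  have "totD i f = (\<lambda>p. pdv (X i) f p + (\<Sum>v\<in>{v\<in>S. is_avar v}. p (shiftv i v) * pdv v f p))"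
    using totD_formula[OF S] by (simp add: fun_eq_iff)
  also have "\<dots> \<in> nf" using S f
    by (intro nf_add nf_sum nf_mul nf_var nf_pdv) auto
  finally show ?thesis .
qed

lemma common_dep:
  assumes "f \<in> nf" "h \<in> nf"
  obtains S where "finite S" "dep S f" "dep S h"
proof -
  obtain S T where "finite S" "dep S f" "finite T" "dep T h" using assms nf_dep by blast
  then have "finite (S \<union> T)" "dep (S \<union> T) f" "dep (S \<union> T) h"
    using dep_mono[of S f "S \<union> T"] dep_mono[of T h "S \<union> T"] by auto
  then show ?thesis by (rule that)
qed

lemma totD_add: "f \<in> nf \<Longrightarrow> h \<in> nf \<Longrightarrow> totD i (\<lambda>p. f p + h p) p = totD i f p + totD i h p"
proof -
  assume f: "f \<in> nf" and h: "h \<in> nf"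
  obtain S where S: "finite S" "dep S f" "dep S h" using common_dep[OF f h] by blast
  have d: "dep S (\<lambda>p. f p + h p)" using S unfolding dep_def by metis
  show ?thesis
    unfolding totD_formula[OF S(1) d] totD_formula[OF S(1) S(2)] totD_formula[OF S(1) S(3)]
    using f h by (simp add: pdv_add distrib_left sum.distrib)
qed

lemma totD_mul: "f \<in> nf \<Longrightarrow> h \<in> nf \<Longrightarrow> totD i (\<lambda>p. f p * h p) p = totD i f p * h p + f p * totD i h p"
proof -
  assume f: "f \<in> nf" and h: "h \<in> nf"
  obtain S where S: "finite S" "dep S f" "dep S h" using common_dep[OF f h] by blast
  have d: "dep S (\<lambda>p. f p * h p)" using S unfolding dep_def by metis
  show ?thesis
    unfolding totD_formula[OF S(1) d] totD_formula[OF S(1) S(2)] totD_formula[OF S(1) S(3)]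
    using f h by (simp add: pdv_mul algebra_simps sum.distrib sum_distrib_left sum_distrib_right)
qed

lemma totD_const: "totD i (\<lambda>p. r) p = 0"
  using totD_formula[of "{}" "\<lambda>p. r"] by (simp add: dep_def pdv_const)

lemma totD_var: "totD i (\<lambda>q. q v) p = (case v of X l \<Rightarrow> (if i = l then 1 else 0) | A a k J \<Rightarrow> p (A a k (J + {#i#})))"
proof -
  have d: "dep {v} (\<lambda>q. q v)" by (simp add: dep_def)
  have f1: "finite {v}" by simp
  show ?thesis
  proof (cases v)
    case (X l)
    then have e: "{w \<in> {v}. is_avar w} = {}" by auto
    show ?thesis unfolding totD_formula[OF f1 d, of i p] e using X by (simp add: pdv_var)
  next
    case (A a k J)
    then have e: "{w \<in> {v}. is_avar w} = {v}" by auto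
    show ?thesis unfolding totD_formula[OF f1 d, of i p] e using A by (simp add: pdv_var)
  qed
qed

lemma totD_varA: "totD i (\<lambda>p. p (A a k J)) p = p (A a k (J + {#i#}))"
  by (simp add: totD_var)

lemma totD_sm: "smooth4 g \<Longrightarrow> totD i (\<lambda>p. g (xp p)) p = pdx i g (xp p)"
proof -
  assume g: "smooth4 g"
  have d: "dep (range X) (\<lambda>p. g (xp p))" by (rule dep_sm)
  have e: "{v \<in> range X. is_avar v} = {}" by auto
  show ?thesis using totD_formula[OF _ d, of i p] g by (simp add: e pdv_smX)
qed

lemma totD_sum: "finite T \<Longrightarrow> (\<And>s. s \<in> T \<Longrightarrow> f s \<in> nf) \<Longrightarrow> totD i (\<lambda>p. \<Sum>s\<in>T. f s p) p = (\<Sum>s\<in>T. totD i (f s) p)"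
proof (induction T rule: finite_induct)
  case empty
  then show ?case by (simp add: totD_const)
next
  case (insert x F)
  have "totD i (\<lambda>p. \<Sum>s\<in>insert x F. f s p) p = totD i (\<lambda>p. f x p + (\<Sum>s\<in>F. f s p)) p"
    using insert by simp
  also have "\<dots> = totD i (f x) p + totD i (\<lambda>p. \<Sum>s\<in>F. f s p) p"
    using insert by (intro totD_add nf_sum) auto
  finally show ?case using insert by simp
qed

lemma nf_cmul: "f \<in> nf \<Longrightarrow> (\<lambda>p. r * f p) \<in> nf"
  using nf_mul[OF nf_const] by blast

lemma nf_diff: "f \<in> nf \<Longrightarrow> h \<in> nf \<Longrightarrow> (\<lambda>p. f p - h p) \<in> nf"
proof -
  assume "f \<in> nf" "h \<in> nf"
  then have "(\<lambda>p. f p + (-1) * h p) \<in> nf" by (intro nf_add nf_cmul)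
  then show ?thesis by simp
qed

lemma totD_cmul: "f \<in> nf \<Longrightarrow> totD i (\<lambda>p. r * f p) p = r * totD i f p"
  using totD_mul[OF nf_const, of f i r p] by (simp add: totD_const)

lemma totD_diff: "f \<in> nf \<Longrightarrow> h \<in> nf \<Longrightarrow> totD i (\<lambda>p. f p - h p) p = totD i f p - totD i h p"
proof -
  assume f: "f \<in> nf" and h: "h \<in> nf"
  have "totD i (\<lambda>p. f p - h p) p = totD i (\<lambda>p. f p + (-1) * h p) p" by simp
  also have "\<dots> = totD i f p + totD i (\<lambda>p. (-1) * h p) p" using f h by (intro totD_add nf_cmul)
  also have "\<dots> = totD i f p - totD i h p" using totD_cmul[OF h, of i "-1" p] by simp
  finally show ?thesis .
qed

text \<open>Polynomial differential functions: total derivatives commute.\<close>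

inductive_set pnf :: "'g dfun set" where
  pnf_const: "(\<lambda>p. r) \<in> pnf"
| pnf_var: "(\<lambda>p. p v) \<in> pnf"
| pnf_add: "f \<in> pnf \<Longrightarrow> h \<in> pnf \<Longrightarrow> (\<lambda>p. f p + h p) \<in> pnf"
| pnf_mul: "f \<in> pnf \<Longrightarrow> h \<in> pnf \<Longrightarrow> (\<lambda>p. f p * h p) \<in> pnf"

lemma pnf_nf: "f \<in> pnf \<Longrightarrow> f \<in> nf"
  by (induction rule: pnf.induct) (auto intro: nf.intros)

lemma pnf_totD_comm: "f \<in> pnf \<Longrightarrow> (\<forall>i. totD i f \<in> pnf) \<and> (\<forall>i j. totD i (totD j f) = totD j (totD i f))"
proof (induction rule: pnf.induct)
  case (pnf_const r)
  have e: "totD i (\<lambda>p. c) = (\<lambda>p. 0)" for i and c :: real by (simp add: fun_eq_iff totD_const)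
  show ?case by (simp add: e pnf.pnf_const)
next
  case (pnf_var v)
  show ?case
  proof (cases v)
    case (X l)
    have e: "totD i (\<lambda>p. p v) = (\<lambda>p. if i = l then 1 else 0)" for i by (simp add: fun_eq_iff totD_var X)
    have e2: "totD i (\<lambda>p. c) = (\<lambda>p. 0)" for i and c :: real by (simp add: fun_eq_iff totD_const)
    show ?thesis by (simp add: e e2 pnf.pnf_const)
  next
    case (A a k J)
    have e: "totD i (\<lambda>p. p (A a k J')) = (\<lambda>p. p (A a k (J' + {#i#})))" for i J' by (simp add: fun_eq_iff totD_var)
    show ?thesis by (simp add: A e pnf.pnf_var add.commute add.left_commute)
  qed
next
  case (pnf_add f h)
  have fn: "f \<in> nf" "h \<in> nf" using pnf_add pnf_nf by auto
  have e: "totD i (\<lambda>p. f p + h p) = (\<lambda>p. totD i f p + totD i h p)" for i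
    using fn by (simp add: fun_eq_iff totD_add)
  have dn: "totD j f \<in> nf" "totD j h \<in> nf" for j using pnf_add.IH pnf_nf by blast+
  have e2: "totD i (\<lambda>p. totD j f p + totD j h p) = (\<lambda>p. totD i (totD j f) p + totD i (totD j h) p)" for i j
    using dn by (simp add: fun_eq_iff totD_add)
  show ?case using pnf_add by (simp add: e e2 pnf.pnf_add)
next
  case (pnf_mul f h)
  have fn: "f \<in> nf" "h \<in> nf" using pnf_mul pnf_nf by auto
  have dn: "totD j f \<in> nf" "totD j h \<in> nf" for j using pnf_mul.IH pnf_nf by blast+
  have e: "totD i (\<lambda>p. f p * h p) = (\<lambda>p. totD i f p * h p + f p * totD i h p)" for i
    using fn by (simp add: fun_eq_iff totD_mul)
  have e2: "totD i (\<lambda>p. totD j f p * h p + f p * totD j h p) =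
     (\<lambda>p. totD i (totD j f) p * h p + totD j f p * totD i h p + (totD i f p * totD j h p + f p * totD i (totD j h) p))" for i j
    using fn dn by (simp add: fun_eq_iff totD_add totD_mul nf_mul)
  have c: "totD i (totD j (\<lambda>p. f p * h p)) = totD j (totD i (\<lambda>p. f p * h p))" for i j
  proof -
    have cf: "totD i (totD j f) = totD j (totD i f)" and ch: "totD i (totD j h) = totD j (totD i h)"
      using pnf_mul.IH by blast+
    have "totD i (totD j (\<lambda>p. f p * h p)) = (\<lambda>p. totD i (totD j f) p * h p + totD j f p * totD i h p + (totD i f p * totD j h p + f p * totD i (totD j h) p))"
      by (simp only: e e2)
    also have "\<dots> = (\<lambda>p. totD j (totD i f) p * h p + totD i f p * totD j h p + (totD j f p * totD i h p + f p * totD j (totD i h) p))"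
      unfolding cf ch by (simp add: fun_eq_iff algebra_simps)
    also have "\<dots> = totD j (totD i (\<lambda>p. f p * h p))"
      by (simp only: e e2)
    finally show ?thesis .
  qed
  have m: "totD i (\<lambda>p. f p * h p) \<in> pnf" for i
    unfolding e using pnf_mul.IH pnf_mul.hyps by (intro pnf.pnf_add pnf.pnf_mul) blast+
  show ?case using c m by blast
qed

lemma pnf_totD: "f \<in> pnf \<Longrightarrow> totD i f \<in> pnf"
  using pnf_totD_comm by blast

lemma totD_comm: "f \<in> pnf \<Longrightarrow> totD i (totD j f) p = totD j (totD i f) p"
  using pnf_totD_comm by metis

lemma pnf_sum: "finite T \<Longrightarrow> (\<And>s. s \<in> T \<Longrightarrow> f s \<in> pnf) \<Longrightarrow> (\<lambda>p. \<Sum>s\<in>T. f s p) \<in> pnf"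
proof (induction T rule: finite_induct)
  case empty
  then show ?case using pnf_const[of 0] by simp
next
  case (insert x F)
  then show ?case using pnf_add[of "f x" "\<lambda>p. \<Sum>s\<in>F. f s p"] by simp
qed

lemma pnf_cmul: "f \<in> pnf \<Longrightarrow> (\<lambda>p. r * f p) \<in> pnf"
  using pnf_mul[OF pnf_const] by blast

lemma pnf_diff: "f \<in> pnf \<Longrightarrow> h \<in> pnf \<Longrightarrow> (\<lambda>p. f p - h p) \<in> pnf"
proof -
  assume "f \<in> pnf" "h \<in> pnf"
  then have "(\<lambda>p. f p + (-1) * h p) \<in> pnf" by (intro pnf_add pnf_cmul)
  then show ?thesis by simp
qed

definition vb :: "('g::finite \<Rightarrow> 'g \<Rightarrow> 'g \<Rightarrow> real) \<Rightarrow> ('g \<Rightarrow> real) \<Rightarrow> ('g \<Rightarrow> real) \<Rightarrow> 'g \<Rightarrow> real" where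
  "vb c u v a = (\<Sum>b\<in>UNIV. \<Sum>d\<in>UNIV. c a b d * u b * v d)"

definition mv :: "('g::finite \<Rightarrow> 'g \<Rightarrow> real) \<Rightarrow> ('g \<Rightarrow> real) \<Rightarrow> 'g \<Rightarrow> real" where
  "mv M u a = (\<Sum>b\<in>UNIV. M a b * u b)"

lemma sum_rot3: "(\<Sum>d\<in>SA. \<Sum>e\<in>SB. \<Sum>f\<in>SC. Zf d e f) = (\<Sum>e\<in>SB. \<Sum>f\<in>SC. \<Sum>d\<in>SA. Zf d e f)"
proof -
  have "(\<Sum>d\<in>SA. \<Sum>e\<in>SB. \<Sum>f\<in>SC. Zf d e f) = (\<Sum>e\<in>SB. \<Sum>d\<in>SA. \<Sum>f\<in>SC. Zf d e f)" by (rule sum.swap)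
  also have "\<dots> = (\<Sum>e\<in>SB. \<Sum>f\<in>SC. \<Sum>d\<in>SA. Zf d e f)" by (rule sum.cong[OF refl], rule sum.swap)
  finally show ?thesis .
qed

lemma vb_addL: "vb c (\<lambda>b. u b + u' b) v a = vb c u v a + vb c u' v a"
  by (simp add: vb_def algebra_simps sum.distrib)
lemma vb_addR: "vb c u (\<lambda>b. v b + v' b) a = vb c u v a + vb c u v' a"
  by (simp add: vb_def algebra_simps sum.distrib)
lemma vb_diffL: "vb c (\<lambda>b. u b - u' b) v a = vb c u v a - vb c u' v a"
  by (simp add: vb_def algebra_simps sum_subtractf)
lemma vb_diffR: "vb c u (\<lambda>b. v b - v' b) a = vb c u v a - vb c u v' a"
  by (simp add: vb_def algebra_simps sum_subtractf)
lemma vb_cmulL: "vb c (\<lambda>b. r * u b) v a = r * vb c u v a"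
  by (simp add: vb_def algebra_simps sum_distrib_left)
lemma vb_cmulR: "vb c u (\<lambda>b. r * v b) a = r * vb c u v a"
  by (simp add: vb_def algebra_simps sum_distrib_left)
lemma vb_negL: "vb c (\<lambda>b. - u b) v a = - vb c u v a"
  by (simp add: vb_def sum_negf)
lemma vb_negR: "vb c u (\<lambda>b. - v b) a = - vb c u v a"
  by (simp add: vb_def sum_negf)
lemma vb_sumR: "vb c u (\<lambda>d. \<Sum>s\<in>T. w s d) a = (\<Sum>s\<in>T. vb c u (w s) a)"
proof -
  have "vb c u (\<lambda>d. \<Sum>s\<in>T. w s d) a = (\<Sum>b\<in>UNIV. \<Sum>d\<in>UNIV. \<Sum>s\<in>T. c a b d * u b * w s d)"
    by (simp add: vb_def sum_distrib_left)
  also have "\<dots> = (\<Sum>s\<in>T. \<Sum>b\<in>UNIV. \<Sum>d\<in>UNIV. c a b d * u b * w s d)"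
    by (rule sum_rot3[symmetric])
  finally show ?thesis by (simp add: vb_def)
qed
lemma vb_sumL: "vb c (\<lambda>b. \<Sum>s\<in>T. w s b) v a = (\<Sum>s\<in>T. vb c (w s) v a)"
proof -
  have "vb c (\<lambda>b. \<Sum>s\<in>T. w s b) v a = (\<Sum>b\<in>UNIV. \<Sum>d\<in>UNIV. \<Sum>s\<in>T. c a b d * w s b * v d)"
    by (simp add: vb_def sum_distrib_left sum_distrib_right mult.assoc)
  also have "\<dots> = (\<Sum>s\<in>T. \<Sum>b\<in>UNIV. \<Sum>d\<in>UNIV. c a b d * w s b * v d)"
    by (rule sum_rot3[symmetric])
  finally show ?thesis by (simp add: vb_def)
qed
lemma vb_zeroR: "vb c u (\<lambda>b. 0) a = 0" by (simp add: vb_def)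
lemma vb_zeroL: "vb c (\<lambda>b. 0) v a = 0" by (simp add: vb_def)

lemma lie_anti: "lie_structure c \<Longrightarrow> c a b d = - c a d b"
  unfolding lie_structure_def by blast

lemma lie_jac: "lie_structure c \<Longrightarrow> (\<Sum>f\<in>UNIV. c a b f * c f d e + c a d f * c f e b + c a e f * c f b d) = 0"
  unfolding lie_structure_def by blast

lemma vb_antisym:
  assumes L: "lie_structure c"
  shows "vb c u v a = - vb c v u a"
proof -
  have sw: "vb c v u a = (\<Sum>b\<in>UNIV. \<Sum>d\<in>UNIV. c a d b * v d * u b)"
    unfolding vb_def by (rule sum.swap)
  have "vb c u v a + vb c v u a = (\<Sum>b\<in>UNIV. \<Sum>d\<in>UNIV. c a b d * u b * v d + c a d b * v d * u b)"
    unfolding sw by (simp add: vb_def sum.distrib)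
  also have "\<dots> = 0"
  proof -
    have "c a b d * u b * v d + c a d b * v d * u b = 0" for b d
      using lie_anti[OF L, of a b d] by (simp add: algebra_simps)
    then show ?thesis by simp
  qed
  finally show ?thesis by simp
qed

lemma vb_triple:
  "vb c u (vb c v w) a = (\<Sum>b\<in>UNIV. \<Sum>e\<in>UNIV. \<Sum>f\<in>UNIV. u b * v e * w f * (\<Sum>d\<in>UNIV. c a b d * c d e f))"
proof -
  have "vb c u (vb c v w) a = (\<Sum>b\<in>UNIV. \<Sum>d\<in>UNIV. \<Sum>e\<in>UNIV. \<Sum>f\<in>UNIV. u b * v e * w f * (c a b d * c d e f))"
    by (simp add: vb_def sum_distrib_left algebra_simps)
  also have "\<dots> = (\<Sum>b\<in>UNIV. \<Sum>e\<in>UNIV. \<Sum>f\<in>UNIV. \<Sum>d\<in>UNIV. u b * v e * w f * (c a b d * c d e f))"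
    by (rule sum.cong[OF refl], rule sum_rot3)
  also have "\<dots> = (\<Sum>b\<in>UNIV. \<Sum>e\<in>UNIV. \<Sum>f\<in>UNIV. u b * v e * w f * (\<Sum>d\<in>UNIV. c a b d * c d e f))"
    by (simp add: sum_distrib_left)
  finally show ?thesis .
qed

lemma vb_jacobi:
  assumes L: "lie_structure c"
  shows "vb c u (vb c v w) a + vb c v (vb c w u) a + vb c w (vb c u v) a = 0"
proof -
  define J where "J b e f = (\<Sum>d\<in>UNIV. c a b d * c d e f)" for b e f
  have t1: "vb c u (vb c v w) a = (\<Sum>b\<in>UNIV. \<Sum>e\<in>UNIV. \<Sum>f\<in>UNIV. u b * v e * w f * J b e f)"
    unfolding J_def by (rule vb_triple)
  have "vb c v (vb c w u) a = (\<Sum>e\<in>UNIV. \<Sum>f\<in>UNIV. \<Sum>b\<in>UNIV. v e * w f * u b * J e f b)"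
    unfolding J_def by (rule vb_triple)
  also have "\<dots> = (\<Sum>e\<in>UNIV. \<Sum>f\<in>UNIV. \<Sum>b\<in>UNIV. u b * v e * w f * J e f b)"
    by (simp add: mult_ac)
  also have "\<dots> = (\<Sum>b\<in>UNIV. \<Sum>e\<in>UNIV. \<Sum>f\<in>UNIV. u b * v e * w f * J e f b)"
    by (rule sum_rot3[symmetric])
  finally have t2: "vb c v (vb c w u) a = (\<Sum>b\<in>UNIV. \<Sum>e\<in>UNIV. \<Sum>f\<in>UNIV. u b * v e * w f * J e f b)" .
  have "vb c w (vb c u v) a = (\<Sum>f\<in>UNIV. \<Sum>b\<in>UNIV. \<Sum>e\<in>UNIV. w f * u b * v e * J f b e)"
    unfolding J_def by (rule vb_triple)
  also have "\<dots> = (\<Sum>f\<in>UNIV. \<Sum>b\<in>UNIV. \<Sum>e\<in>UNIV. u b * v e * w f * J f b e)"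
    by (simp add: mult_ac)
  also have "\<dots> = (\<Sum>b\<in>UNIV. \<Sum>e\<in>UNIV. \<Sum>f\<in>UNIV. u b * v e * w f * J f b e)"
    by (rule sum_rot3)
  finally have t3: "vb c w (vb c u v) a = (\<Sum>b\<in>UNIV. \<Sum>e\<in>UNIV. \<Sum>f\<in>UNIV. u b * v e * w f * J f b e)" .
  have jz: "J b e f + J e f b + J f b e = 0" for b e f
    using lie_jac[OF L, of a b e f] unfolding J_def by (simp add: sum.distrib)
  have "vb c u (vb c v w) a + vb c v (vb c w u) a + vb c w (vb c u v) a
     = (\<Sum>b\<in>UNIV. \<Sum>e\<in>UNIV. \<Sum>f\<in>UNIV. u b * v e * w f * (J b e f + J e f b + J f b e))"
    unfolding t1 t2 t3 by (simp add: sum.distrib distrib_left)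
  also have "\<dots> = 0" by (simp add: jz)
  finally show ?thesis .
qed

lemma mv_add: "mv M (\<lambda>b. u b + v b) a = mv M u a + mv M v a"
  by (simp add: mv_def algebra_simps sum.distrib)
lemma mv_diff: "mv M (\<lambda>b. u b - v b) a = mv M u a - mv M v a"
  by (simp add: mv_def algebra_simps sum_subtractf)
lemma mv_cmul: "mv M (\<lambda>b. r * u b) a = r * mv M u a"
  by (simp add: mv_def algebra_simps sum_distrib_left)
lemma mv_neg: "mv M (\<lambda>b. - u b) a = - mv M u a"
  by (simp add: mv_def sum_negf)
lemma mv_sum: "mv M (\<lambda>b. \<Sum>s\<in>T. w s b) a = (\<Sum>s\<in>T. mv M (w s) a)"
  unfolding mv_def sum_distrib_left by (rule sum.swap)
lemma mv_zero: "mv M (\<lambda>b. 0) a = 0" by (simp add: mv_def)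

definition intw :: "('g::finite \<Rightarrow> 'g \<Rightarrow> 'g \<Rightarrow> real) \<Rightarrow> ('g \<Rightarrow> 'g \<Rightarrow> real) \<Rightarrow> bool" where
  "intw c M \<longleftrightarrow> (\<forall>a g d. (\<Sum>b\<in>UNIV. M a b * c b g d) + (\<Sum>b\<in>UNIV. c a b g * M b d) = 0)"

lemma mv_vb:
  assumes L: "lie_structure c" and I: "intw c M"
  shows "mv M (vb c u v) a = vb c u (mv M v) a"
proof -
  have "mv M (vb c u v) a = (\<Sum>b\<in>UNIV. \<Sum>g\<in>UNIV. \<Sum>d\<in>UNIV. M a b * (c b g d * u g * v d))"
    by (simp add: mv_def vb_def sum_distrib_left)
  also have "\<dots> = (\<Sum>b\<in>UNIV. \<Sum>g\<in>UNIV. \<Sum>d\<in>UNIV. u g * v d * (M a b * c b g d))"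
    by (simp add: mult_ac)
  also have "\<dots> = (\<Sum>g\<in>UNIV. \<Sum>d\<in>UNIV. \<Sum>b\<in>UNIV. u g * v d * (M a b * c b g d))"
    by (rule sum_rot3)
  also have "\<dots> = (\<Sum>g\<in>UNIV. \<Sum>d\<in>UNIV. u g * v d * (\<Sum>b\<in>UNIV. M a b * c b g d))"
    by (simp add: sum_distrib_left)
  also have "\<dots> = (\<Sum>g\<in>UNIV. \<Sum>d\<in>UNIV. u g * v d * (\<Sum>b\<in>UNIV. c a g b * M b d))"
  proof -
    have "(\<Sum>b\<in>UNIV. M a b * c b g d) = (\<Sum>b\<in>UNIV. c a g b * M b d)" for g d
    proof -
      have "(\<Sum>b\<in>UNIV. M a b * c b g d) = - (\<Sum>b\<in>UNIV. c a b g * M b d)"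
        using I unfolding intw_def by (simp add: eq_neg_iff_add_eq_0)
      also have "\<dots> = (\<Sum>b\<in>UNIV. - (c a b g * M b d))"
        by (simp add: sum_negf)
      also have "\<dots> = (\<Sum>b\<in>UNIV. c a g b * M b d)"
        by (rule sum.cong[OF refl]) (simp add: lie_anti[OF L, of a _ g])
      finally show ?thesis .
    qed
    then show ?thesis by simp
  qed
  also have "\<dots> = (\<Sum>g\<in>UNIV. \<Sum>d\<in>UNIV. \<Sum>b\<in>UNIV. u g * v d * (c a g b * M b d))"
    by (simp add: sum_distrib_left)
  also have "\<dots> = (\<Sum>g\<in>UNIV. \<Sum>b\<in>UNIV. \<Sum>d\<in>UNIV. u g * v d * (c a g b * M b d))"
    by (rule sum.cong[OF refl], rule sum.swap)
  also have "\<dots> = (\<Sum>g\<in>UNIV. \<Sum>b\<in>UNIV. \<Sum>d\<in>UNIV. c a g b * u g * (M b d * v d))"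
    by (simp add: mult_ac)
  also have "\<dots> = vb c u (mv M v) a"
    by (simp add: mv_def vb_def sum_distrib_left)
  finally show ?thesis .
qed

lemma mv_vb2:
  assumes L: "lie_structure c" and I: "intw c M"
  shows "mv M (vb c u v) a = vb c (mv M u) v a"
proof -
  have "mv M (vb c u v) a = mv M (\<lambda>b. - vb c v u b) a"
    by (rule arg_cong[where f="\<lambda>w. mv M w a"]) (rule ext, rule vb_antisym[OF L])
  also have "\<dots> = - mv M (vb c v u) a" by (rule mv_neg)
  finally have 1: "mv M (vb c u v) a = - mv M (vb c v u) a" .
  have 2: "mv M (vb c v u) a = vb c v (mv M u) a" by (rule mv_vb[OF L I])
  have 3: "vb c (mv M u) v a = - vb c v (mv M u) a" by (rule vb_antisym[OF L])
  show ?thesis using 1 2 3 by linarith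
qed

lemma Fld_eq: "Fld c a i j = (\<lambda>p. p (A a j {#i#}) - p (A a i {#j#}) + (\<Sum>b\<in>UNIV. \<Sum>d\<in>UNIV. c a b d * p (A b i {#}) * p (A d j {#})))"
  by (rule ext) (simp add: Fld_def)

lemma Fld_vb: "Fld c a i j p = p (A a j {#i#}) - p (A a i {#j#}) + vb c (\<lambda>b. p (A b i {#})) (\<lambda>d. p (A d j {#})) a"
  by (simp add: Fld_def vb_def)

lemma Fld_anti: "Fld c a i j p = - Fld c a j i p" if "lie_structure c"
proof -
  have "vb c (\<lambda>b. p (A b i {#})) (\<lambda>d. p (A d j {#})) a = - vb c (\<lambda>b. p (A b j {#})) (\<lambda>d. p (A d i {#})) a"
    by (rule vb_antisym[OF that])
  then show ?thesis unfolding Fld_vb by simp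
qed

lemma pnf_Fld: "Fld c a i j \<in> pnf"
  unfolding Fld_eq by (intro pnf_add pnf_diff pnf_sum pnf_mul pnf_var pnf_const) auto

lemma nf_Fld: "Fld c a i j \<in> nf"
  using pnf_Fld pnf_nf by blast

lemma cov_eq: "cov c i G a = (\<lambda>p. totD i (G a) p + (\<Sum>b\<in>UNIV. \<Sum>d\<in>UNIV. c a b d * p (A b i {#}) * G d p))"
  by (rule ext) (simp add: cov_def)

lemma cov_vb: "cov c i G a p = totD i (G a) p + vb c (\<lambda>b. p (A b i {#})) (\<lambda>d. G d p) a"
  by (simp add: cov_def vb_def)

lemma pnf_cov: "(\<And>b. G b \<in> pnf) \<Longrightarrow> cov c i G a \<in> pnf"
  unfolding cov_eq by (intro pnf_add pnf_totD pnf_sum pnf_mul pnf_var pnf_const) auto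

lemma nf_cov: "(\<And>b. G b \<in> nf) \<Longrightarrow> cov c i G a \<in> nf"
  unfolding cov_eq by (intro nf_add nf_totD nf_sum nf_mul nf_var nf_const) auto

lemma totD_neg: "f \<in> nf \<Longrightarrow> totD i (\<lambda>p. - f p) p = - totD i f p"
  using totD_cmul[of f i "-1" p] by simp

lemma nf_neg: "f \<in> nf \<Longrightarrow> (\<lambda>p. - f p) \<in> nf"
  using nf_cmul[of f "-1"] by simp

lemma cov_add: "(\<And>b. G b \<in> nf) \<Longrightarrow> (\<And>b. H b \<in> nf) \<Longrightarrow>
   cov c i (\<lambda>a p. G a p + H a p) a p = cov c i G a p + cov c i H a p"
  by (simp add: cov_vb totD_add vb_addR)

lemma cov_diff: "(\<And>b. G b \<in> nf) \<Longrightarrow> (\<And>b. H b \<in> nf) \<Longrightarrow>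
   cov c i (\<lambda>a p. G a p - H a p) a p = cov c i G a p - cov c i H a p"
  by (simp add: cov_vb totD_diff vb_diffR)

lemma cov_cmul: "(\<And>b. G b \<in> nf) \<Longrightarrow> cov c i (\<lambda>a p. r * G a p) a p = r * cov c i G a p"
  by (simp add: cov_vb totD_cmul vb_cmulR algebra_simps)

lemma cov_neg: "(\<And>b. G b \<in> nf) \<Longrightarrow> cov c i (\<lambda>a p. - G a p) a p = - cov c i G a p"
  by (simp add: cov_vb totD_neg vb_negR)

lemma cov_zero: "cov c i (\<lambda>a p. 0) a p = 0"
  by (simp add: cov_vb totD_const vb_zeroR)

lemma cov_sum: "finite T \<Longrightarrow> (\<And>s b. s \<in> T \<Longrightarrow> G s b \<in> nf) \<Longrightarrow>
   cov c i (\<lambda>a p. \<Sum>s\<in>T. G s a p) a p = (\<Sum>s\<in>T. cov c i (G s) a p)"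
  by (simp add: cov_vb totD_sum vb_sumR sum.distrib)

lemma totD_bil:
  assumes U: "\<And>b. U b \<in> nf" and V: "\<And>d. V d \<in> nf"
  shows "totD i (\<lambda>p. \<Sum>b\<in>UNIV. \<Sum>d\<in>UNIV. c a b d * U b p * V d p) p
     = vb c (\<lambda>b. totD i (U b) p) (\<lambda>d. V d p) a + vb c (\<lambda>b. U b p) (\<lambda>d. totD i (V d) p) a"
proof -
  have n1: "(\<lambda>p. c a b d * U b p) \<in> nf" for b d using U by (rule nf_cmul)
  have n2: "(\<lambda>p. c a b d * U b p * V d p) \<in> nf" for b d using n1 V by (rule nf_mul)
  have n3: "(\<lambda>p. \<Sum>d\<in>UNIV. c a b d * U b p * V d p) \<in> nf" for b using n2 by (intro nf_sum) auto
  have "totD i (\<lambda>p. \<Sum>b\<in>UNIV. \<Sum>d\<in>UNIV. c a b d * U b p * V d p) p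
     = (\<Sum>b\<in>UNIV. \<Sum>d\<in>UNIV. totD i (\<lambda>p. c a b d * U b p * V d p) p)"
    using n2 n3 by (simp add: totD_sum)
  also have "\<dots> = (\<Sum>b\<in>UNIV. \<Sum>d\<in>UNIV. c a b d * totD i (U b) p * V d p + c a b d * U b p * totD i (V d) p)"
    using n1 U V by (simp add: totD_mul totD_cmul)
  also have "\<dots> = vb c (\<lambda>b. totD i (U b) p) (\<lambda>d. V d p) a + vb c (\<lambda>b. U b p) (\<lambda>d. totD i (V d) p) a"
    by (simp add: vb_def sum.distrib)
  finally show ?thesis .
qed

lemma totD_Fld: "totD k (Fld c a i j) p = p (A a j ({#i#} + {#k#})) - p (A a i ({#j#} + {#k#}))
   + vb c (\<lambda>b. p (A b i {#k#})) (\<lambda>d. p (A d j {#})) a + vb c (\<lambda>b. p (A b i {#})) (\<lambda>d. p (A d j {#k#})) a"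
proof -
  have "totD k (Fld c a i j) p = totD k (\<lambda>p. p (A a j {#i#}) - p (A a i {#j#})) p
     + totD k (\<lambda>p. \<Sum>b\<in>UNIV. \<Sum>d\<in>UNIV. c a b d * p (A b i {#}) * p (A d j {#})) p"
    unfolding Fld_eq by (intro totD_add nf_diff nf_var nf_sum nf_mul nf_const) auto
  also have "\<dots> = p (A a j ({#i#} + {#k#})) - p (A a i ({#j#} + {#k#}))
   + vb c (\<lambda>b. p (A b i {#k#})) (\<lambda>d. p (A d j {#})) a + vb c (\<lambda>b. p (A b i {#})) (\<lambda>d. p (A d j {#k#})) a"
    by (simp add: totD_diff nf_var totD_varA totD_bil[where U="\<lambda>b p. p (A b i {#})" and V="\<lambda>d p. p (A d j {#})", simplified] nf.nf_var)
  finally show ?thesis .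
qed

lemma cov_act:
  assumes L: "lie_structure c" and sm: "\<And>a b. smooth4 (M a b)" and I: "intw c (\<lambda>a b. M a b (xp p))"
    and G: "\<And>b. G b \<in> nf"
  shows "cov c i (\<lambda>a p. \<Sum>b\<in>UNIV. M a b (xp p) * G b p) a p
     = (\<Sum>b\<in>UNIV. pdx i (M a b) (xp p) * G b p) + (\<Sum>b\<in>UNIV. M a b (xp p) * cov c i G b p)"
proof -
  have n: "(\<lambda>p. M a b (xp p) * G b p) \<in> nf" for a b using sm G by (intro nf_mul nf_sm)
  have 1: "totD i (\<lambda>p. \<Sum>b\<in>UNIV. M a b (xp p) * G b p) p = (\<Sum>b\<in>UNIV. pdx i (M a b) (xp p) * G b p + M a b (xp p) * totD i (G b) p)"
    using n sm G by (simp add: totD_sum totD_mul totD_sm nf_sm)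
  have 2: "vb c (\<lambda>b. p (A b i {#})) (\<lambda>d. \<Sum>b\<in>UNIV. M d b (xp p) * G b p) a
      = (\<Sum>b\<in>UNIV. M a b (xp p) * vb c (\<lambda>b. p (A b i {#})) (\<lambda>d. G d p) b)"
  proof -
    have m: "mv (\<lambda>a b. M a b (xp p)) (\<lambda>d. G d p) = (\<lambda>d. \<Sum>b\<in>UNIV. M d b (xp p) * G b p)"
      by (rule ext) (simp add: mv_def)
    show ?thesis using mv_vb[OF L I, of "\<lambda>b. p (A b i {#})" "\<lambda>d. G d p" a] by (simp add: m mv_def)
  qed
  show ?thesis
    by (simp add: cov_vb 1 2 sum.distrib distrib_left)
qed

lemma cov_comm:
  assumes L: "lie_structure c" and G: "\<And>b. G b \<in> pnf"
  shows "cov c i (cov c j G) a p - cov c j (cov c i G) a p = vb c (\<lambda>b. Fld c b i j p) (\<lambda>d. G d p) a"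
proof -
  have Gn: "G b \<in> nf" for b using G pnf_nf by blast
  have DGn: "totD k (G b) \<in> nf" for k b using Gn nf_totD by blast
  have e: "cov c i (cov c j G) a p = totD i (totD j (G a)) p
     + vb c (\<lambda>b. p (A b j {#i#})) (\<lambda>d. G d p) a + vb c (\<lambda>b. p (A b j {#})) (\<lambda>d. totD i (G d) p) a
     + vb c (\<lambda>b. p (A b i {#})) (\<lambda>d. totD j (G d) p) a
     + vb c (\<lambda>b. p (A b i {#})) (vb c (\<lambda>b. p (A b j {#})) (\<lambda>d. G d p)) a" for i j
  proof -
    have t: "totD i (cov c j G a) p = totD i (totD j (G a)) p
      + totD i (\<lambda>p. \<Sum>b\<in>UNIV. \<Sum>d\<in>UNIV. c a b d * p (A b j {#}) * G d p) p"
      unfolding cov_eq using Gn DGn by (intro totD_add nf_sum nf_mul nf_var nf_const) auto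
    have t2: "totD i (\<lambda>p. \<Sum>b\<in>UNIV. \<Sum>d\<in>UNIV. c a b d * p (A b j {#}) * G d p) p
       = vb c (\<lambda>b. p (A b j {#i#})) (\<lambda>d. G d p) a + vb c (\<lambda>b. p (A b j {#})) (\<lambda>d. totD i (G d) p) a"
      using totD_bil[where U="\<lambda>b p. p (A b j {#})" and V=G, OF nf_var Gn, of i c a p]
      by (simp add: totD_varA)
    have v: "(\<lambda>d. cov c j G d p) = (\<lambda>d. totD j (G d) p + vb c (\<lambda>b. p (A b j {#})) (\<lambda>d. G d p) d)"
      by (rule ext) (rule cov_vb)
    show ?thesis
      by (simp add: cov_vb[of c i "cov c j G"] t t2 v vb_addR)
  qed
  have comm: "totD i (totD j (G a)) p = totD j (totD i (G a)) p" using totD_comm G by blast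
  have F: "(\<lambda>b. Fld c b i j p) = (\<lambda>b. p (A b j {#i#}) - p (A b i {#j#}) + vb c (\<lambda>b. p (A b i {#})) (\<lambda>d. p (A d j {#})) b)"
    by (rule ext) (rule Fld_vb)
  define ai where "ai = (\<lambda>b. p (A b i {#}))"
  define aj where "aj = (\<lambda>b. p (A b j {#}))"
  define g where "g = (\<lambda>d. G d p)"
  have rhs: "vb c (\<lambda>b. Fld c b i j p) g a = vb c (\<lambda>b. p (A b j {#i#})) g a - vb c (\<lambda>b. p (A b i {#j#})) g a + vb c (vb c ai aj) g a"
    unfolding F ai_def aj_def by (simp add: vb_addL vb_diffL)
  have jac: "vb c g (vb c ai aj) a + vb c ai (vb c aj g) a + vb c aj (vb c g ai) a = 0"
    by (rule vb_jacobi[OF L])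
  have an1: "vb c (vb c ai aj) g a = - vb c g (vb c ai aj) a" by (rule vb_antisym[OF L])
  have an2: "vb c aj (vb c g ai) a = - vb c aj (vb c ai g) a"
  proof -
    have "vb c g ai = (\<lambda>b. - vb c ai g b)" by (rule ext) (rule vb_antisym[OF L])
    then show ?thesis by (simp add: vb_negR)
  qed
  show ?thesis
    using e[of i j] e[of j i] comm rhs jac an1 an2 unfolding ai_def aj_def g_def by linarith
qed

lemma bianchi:
  assumes L: "lie_structure c"
  shows "cov c i (\<lambda>b. Fld c b j k) a p + cov c j (\<lambda>b. Fld c b k i) a p + cov c k (\<lambda>b. Fld c b i j) a p = 0"
proof -
  define ai where "ai = (\<lambda>b. p (A b i {#}))"
  define aj where "aj = (\<lambda>b. p (A b j {#}))"
  define ak where "ak = (\<lambda>b. p (A b k {#}))"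
  define aij where "aij = (\<lambda>b. p (A b i {#j#}))"
  define aji where "aji = (\<lambda>b. p (A b j {#i#}))"
  define aik where "aik = (\<lambda>b. p (A b i {#k#}))"
  define aki where "aki = (\<lambda>b. p (A b k {#i#}))"
  define ajk where "ajk = (\<lambda>b. p (A b j {#k#}))"
  define akj where "akj = (\<lambda>b. p (A b k {#j#}))"
  have c1: "cov c i (\<lambda>b. Fld c b j k) a p = p (A a k ({#j#} + {#i#})) - p (A a j ({#k#} + {#i#}))
     + vb c aji ak a + vb c aj aki a + (vb c ai akj a - vb c ai ajk a + vb c ai (vb c aj ak) a)"
  proof -
    have F: "(\<lambda>b. Fld c b j k p) = (\<lambda>b. akj b - ajk b + vb c aj ak b)"
      unfolding akj_def ajk_def aj_def ak_def by (rule ext) (rule Fld_vb)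
    show ?thesis unfolding cov_vb totD_Fld F
      by (simp add: vb_addR vb_diffR ai_def aji_def ak_def aj_def aki_def)
  qed
  have c2: "cov c j (\<lambda>b. Fld c b k i) a p = p (A a i ({#k#} + {#j#})) - p (A a k ({#i#} + {#j#}))
     + vb c akj ai a + vb c ak aij a + (vb c aj aik a - vb c aj aki a + vb c aj (vb c ak ai) a)"
  proof -
    have F: "(\<lambda>b. Fld c b k i p) = (\<lambda>b. aik b - aki b + vb c ak ai b)"
      unfolding aik_def aki_def ak_def ai_def by (rule ext) (rule Fld_vb)
    show ?thesis unfolding cov_vb totD_Fld F
      by (simp add: vb_addR vb_diffR aj_def akj_def ai_def ak_def aij_def)
  qed
  have c3: "cov c k (\<lambda>b. Fld c b i j) a p = p (A a j ({#i#} + {#k#})) - p (A a i ({#j#} + {#k#}))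
     + vb c aik aj a + vb c ai ajk a + (vb c ak aji a - vb c ak aij a + vb c ak (vb c ai aj) a)"
  proof -
    have F: "(\<lambda>b. Fld c b i j p) = (\<lambda>b. aji b - aij b + vb c ai aj b)"
      unfolding aji_def aij_def ai_def aj_def by (rule ext) (rule Fld_vb)
    show ?thesis unfolding cov_vb totD_Fld F
      by (simp add: vb_addR vb_diffR ak_def aik_def aj_def ai_def ajk_def)
  qed
  have m1: "p (A a k ({#j#} + {#i#})) = p (A a k ({#i#} + {#j#}))" by (simp add: add.commute)
  have m2: "p (A a j ({#k#} + {#i#})) = p (A a j ({#i#} + {#k#}))" by (simp add: add.commute)
  have m3: "p (A a i ({#k#} + {#j#})) = p (A a i ({#j#} + {#k#}))" by (simp add: add.commute)
  have jac: "vb c ai (vb c aj ak) a + vb c aj (vb c ak ai) a + vb c ak (vb c ai aj) a = 0"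
    by (rule vb_jacobi[OF L])
  have s1: "vb c aji ak a = - vb c ak aji a" by (rule vb_antisym[OF L])
  have s2: "vb c akj ai a = - vb c ai akj a" by (rule vb_antisym[OF L])
  have s3: "vb c aik aj a = - vb c aj aik a" by (rule vb_antisym[OF L])
  show ?thesis using c1 c2 c3 m1 m2 m3 jac s1 s2 s3 by linarith
qed

lemma sum4: "sum f (UNIV::4 set) = f 0 + f 1 + f 2 + f 3"
proof -
  have h: "(4::4) = 0" by simp
  show ?thesis using sum_4[of f] unfolding h by (simp add: ac_simps)
qed

lemma eta_sq: "eta k k * eta k k = 1"
  by (simp add: eta_def)

lemma eta_offdiag: "eta k l = (if k = l then eta k k else 0)"
  by (simp add: eta_def)

lemma sum_eta: "(\<Sum>l\<in>UNIV. eta j l * f l) = eta j j * f j"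
proof -
  have "(\<Sum>l\<in>UNIV. eta j l * f l) = (\<Sum>l\<in>UNIV. if j = l then eta j j * f j else 0)"
    by (rule sum.cong[OF refl]) (simp add: eta_def)
  also have "\<dots> = eta j j * f j" by simp
  finally show ?thesis .
qed

lemma Z_scalar:
  fixes V :: "4 \<Rightarrow> 4 \<Rightarrow> 4 \<Rightarrow> real" and L :: "4 \<Rightarrow> real" and F :: "4 \<Rightarrow> 4 \<Rightarrow> real"
  assumes sym: "\<And>m k l. V m k l = V k m l"
    and kil: "\<And>m k l. eta k k * V m k l + eta l l * V m l k = 2 * eta k l * L m"
    and anti: "\<And>j l. F j l = - F l j"
  shows "(\<Sum>j\<in>UNIV. eta j j * (\<Sum>l\<in>UNIV. V j i l * F j l - V j j l * F i l)) = 0"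
proof -
  have Yk: "eta l l * V m k l + eta k k * V m l k = 2 * eta k l * L m" for m k l
    using kil[where m=m and k=k and l=l] by (cases "k = 0"; cases "l = 0"; cases "k = l") (simp_all add: eta_def)
  have form: "V m k l = eta l l * (eta k l * L m + eta m l * L k - eta m k * L l)" for m k l
  proof -
    have k1: "eta l l * V m k l + eta k k * V m l k = 2 * eta k l * L m" by (rule Yk)
    have k2: "eta l l * V m k l + eta m m * V l k m = 2 * eta m l * L k"
      using Yk[where m=k and k=m and l=l] sym[of k m l] sym[of k l m] by simp
    have k3: "eta k k * V m l k + eta m m * V l k m = 2 * eta m k * L l"
      using Yk[where m=l and k=m and l=k] sym[of l m k] by simp
    have "eta l l * V m k l = eta k l * L m + eta m l * L k - eta m k * L l"
      using k1 k2 k3 by linarith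
    then have "eta l l * (eta l l * V m k l) = eta l l * (eta k l * L m + eta m l * L k - eta m k * L l)"
      by simp
    then show ?thesis by (simp add: mult.assoc[symmetric] eta_sq)
  qed
  have a: "F 1 0 = - F 0 1" "F 2 0 = - F 0 2" "F 3 0 = - F 0 3" "F 2 1 = - F 1 2" "F 3 1 = - F 1 3" "F 3 2 = - F 2 3"
    by (rule anti)+
  have d: "F j j = 0" for j using anti[of j j] by simp
  have h4: "(4::4) = 0" by simp
  have i4: "i = 0 \<or> i = 1 \<or> i = 2 \<or> i = 3" using exhaust_4[of i] unfolding h4 by blast
  show ?thesis unfolding form
    using i4 apply (elim disjE)
    by (simp_all add: sum4 eta_def a d algebra_simps)
qed

lemma O_scalar:
  fixes w :: "4 \<Rightarrow> 4 \<Rightarrow> real" and D :: "4 \<Rightarrow> 4 \<Rightarrow> 4 \<Rightarrow> real"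
  assumes kil: "\<And>j l. eta j j * w j l + eta l l * w l j = 2 * eta j l * \<kappa>"
    and anti: "\<And>m j l. D m j l = - D m l j"
    and bia: "\<And>i j k. D i j k + D j k i + D k i j = 0"
    and ym: "\<And>i. (\<Sum>j\<in>UNIV. eta j j * D j i j) = 0"
  shows "(\<Sum>j\<in>UNIV. eta j j * (\<Sum>l\<in>UNIV. w i l * D j j l + w j l * D i j l - 2 * (w j l * D j i l))) = 0"
proof -
  define W where "W j l = eta j j * w j l" for j l
  define U where "U = (\<Sum>j\<in>UNIV. \<Sum>l\<in>UNIV. W j l * D i j l)"
  define T where "T = (\<Sum>j\<in>UNIV. \<Sum>l\<in>UNIV. W j l * D l i j)"
  have b1: "D j i l = D i j l + D l i j" for j l
    using bia[where i=j and j=i and k=l] anti[where m=i and j=l and l=j] anti[where m=l and j=j and l=i] by linarith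
  have S: "(\<Sum>j\<in>UNIV. \<Sum>l\<in>UNIV. W j l * D j i l) = U + T"
  proof -
    have b1': "W j l * D j i l = W j l * D i j l + W j l * D l i j" for j l
      using b1[where j=j and l=l] by (simp add: distrib_left)
    have "(\<Sum>j\<in>UNIV. \<Sum>l\<in>UNIV. W j l * D j i l) = (\<Sum>j\<in>UNIV. \<Sum>l\<in>UNIV. W j l * D i j l + W j l * D l i j)"
      by (simp only: b1')
    then show ?thesis unfolding U_def T_def by (simp add: sum.distrib)
  qed
  have Ws: "W j l = 2 * eta j l * \<kappa> - W l j" for j l
    using kil[where j=j and l=l] unfolding W_def by simp
  have T1: "T = (\<Sum>j\<in>UNIV. \<Sum>l\<in>UNIV. eta j l * (2 * \<kappa> * D l i j)) - (\<Sum>j\<in>UNIV. \<Sum>l\<in>UNIV. W l j * D l i j)"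
  proof -
    have "T = (\<Sum>j\<in>UNIV. \<Sum>l\<in>UNIV. eta j l * (2 * \<kappa> * D l i j) - W l j * D l i j)"
      unfolding T_def by (subst Ws) (simp add: algebra_simps)
    then show ?thesis by (simp add: sum_subtractf)
  qed
  have T2: "(\<Sum>j\<in>UNIV. \<Sum>l\<in>UNIV. eta j l * (2 * \<kappa> * D l i j)) = 0"
  proof -
    have "(\<Sum>j\<in>UNIV. \<Sum>l\<in>UNIV. eta j l * (2 * \<kappa> * D l i j)) = (\<Sum>j\<in>UNIV. eta j j * (2 * \<kappa> * D j i j))"
      by (simp add: sum_eta)
    also have "\<dots> = 2 * \<kappa> * (\<Sum>j\<in>UNIV. eta j j * D j i j)"
      by (simp add: sum_distrib_left algebra_simps)
    finally show ?thesis using ym by simp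
  qed
  have T3: "(\<Sum>j\<in>UNIV. \<Sum>l\<in>UNIV. W l j * D l i j) = (\<Sum>j\<in>UNIV. \<Sum>l\<in>UNIV. W j l * D j i l)"
    by (rule sum.swap)
  have TT: "T = - (U + T)" using T1 T2 T3 S by simp
  have Y: "(\<Sum>l\<in>UNIV. w i l * (\<Sum>j\<in>UNIV. eta j j * D j j l)) = 0"
  proof -
    have "(\<Sum>j\<in>UNIV. eta j j * D j j l) = (\<Sum>j\<in>UNIV. - (eta j j * D j l j))" for l
    proof -
      have aj: "\<And>j. D j j l = - D j l j" by (rule anti)
      show ?thesis by (rule sum.cong[OF refl]) (simp add: aj)
    qed
    then have "(\<Sum>j\<in>UNIV. eta j j * D j j l) = - (\<Sum>j\<in>UNIV. eta j j * D j l j)" for l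
      by (simp add: sum_negf)
    then show ?thesis using ym by simp
  qed
  have Y2: "(\<Sum>j\<in>UNIV. eta j j * (\<Sum>l\<in>UNIV. w i l * D j j l)) = (\<Sum>l\<in>UNIV. w i l * (\<Sum>j\<in>UNIV. eta j j * D j j l))"
  proof -
    have "(\<Sum>j\<in>UNIV. eta j j * (\<Sum>l\<in>UNIV. w i l * D j j l)) = (\<Sum>j\<in>UNIV. \<Sum>l\<in>UNIV. w i l * (eta j j * D j j l))"
      by (simp add: sum_distrib_left mult_ac)
    also have "\<dots> = (\<Sum>l\<in>UNIV. \<Sum>j\<in>UNIV. w i l * (eta j j * D j j l))" by (rule sum.swap)
    also have "\<dots> = (\<Sum>l\<in>UNIV. w i l * (\<Sum>j\<in>UNIV. eta j j * D j j l))" by (simp add: sum_distrib_left)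
    finally show ?thesis .
  qed
  have e1: "eta j j * (\<Sum>l\<in>UNIV. w i l * D j j l + w j l * D i j l - 2 * (w j l * D j i l))
     = eta j j * (\<Sum>l\<in>UNIV. w i l * D j j l) + (\<Sum>l\<in>UNIV. W j l * D i j l) - 2 * (\<Sum>l\<in>UNIV. W j l * D j i l)" for j
    unfolding W_def by (simp add: sum.distrib sum_subtractf sum_distrib_left algebra_simps)
  have "(\<Sum>j\<in>UNIV. eta j j * (\<Sum>l\<in>UNIV. w i l * D j j l + w j l * D i j l - 2 * (w j l * D j i l)))
     = (\<Sum>j\<in>UNIV. eta j j * (\<Sum>l\<in>UNIV. w i l * D j j l) + (\<Sum>l\<in>UNIV. W j l * D i j l) - 2 * (\<Sum>l\<in>UNIV. W j l * D j i l))"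
    by (simp only: e1)
  also have "\<dots> = (\<Sum>j\<in>UNIV. eta j j * (\<Sum>l\<in>UNIV. w i l * D j j l)) + U - 2 * (\<Sum>j\<in>UNIV. \<Sum>l\<in>UNIV. W j l * D j i l)"
    unfolding U_def by (simp add: sum.distrib sum_subtractf sum_distrib_left)
  also have "\<dots> = 0" using Y Y2 S TT by simp
  finally show ?thesis .
qed

lemma xi_intw:
  assumes iw: "\<forall>a g d j x. (\<Sum>b\<in>UNIV. xi a b j x * c b g d) + (\<Sum>b\<in>UNIV. c a b g * xi b d j x) = 0"
  shows "intw c (\<lambda>a b. xi a b l x)"
  using iw unfolding intw_def by blast

lemma xi_intw_d:
  fixes xi :: "'g::finite \<Rightarrow> 'g \<Rightarrow> 4 \<Rightarrow> real^4 \<Rightarrow> real"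
  assumes sm: "\<forall>a b j. smooth4 (xi a b j)"
    and iw: "\<forall>a g d j x. (\<Sum>b\<in>UNIV. xi a b j x * c b g d) + (\<Sum>b\<in>UNIV. c a b g * xi b d j x) = 0"
  shows "intw c (\<lambda>a b. pdx k (xi a b l) x)"
  unfolding intw_def
proof (intro allI)
  fix a g d
  have gd: "\<forall>y. xi a' b' l differentiable at y" for a' b' using sm smooth4_diff by blast
  have D: "((\<lambda>t. (\<Sum>b\<in>UNIV. xi a b l (x + t *\<^sub>R axis k 1) * c b g d) + (\<Sum>b\<in>UNIV. c a b g * xi b d l (x + t *\<^sub>R axis k 1)))
     has_real_derivative ((\<Sum>b\<in>UNIV. pdx k (xi a b l) x * c b g d) + (\<Sum>b\<in>UNIV. c a b g * pdx k (xi b d l) x))) (at 0)"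
    by (intro DERIV_add DERIV_sum DERIV_cmult DERIV_cmult_right pdx_hasderiv0 gd)
  have z: "(\<lambda>t. (\<Sum>b\<in>UNIV. xi a b l (x + t *\<^sub>R axis k 1) * c b g d) + (\<Sum>b\<in>UNIV. c a b g * xi b d l (x + t *\<^sub>R axis k 1))) = (\<lambda>t. 0)"
    using iw by simp
  have D0: "((\<lambda>t. (\<Sum>b\<in>UNIV. xi a b l (x + t *\<^sub>R axis k 1) * c b g d) + (\<Sum>b\<in>UNIV. c a b g * xi b d l (x + t *\<^sub>R axis k 1)))
     has_real_derivative 0) (at 0)"
    unfolding z by simp
  show "(\<Sum>b\<in>UNIV. pdx k (xi a b l) x * c b g d) + (\<Sum>b\<in>UNIV. c a b g * pdx k (xi b d l) x) = 0"
    using DERIV_unique[OF D D0] .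
qed

lemma k_eq:
  assumes kil: "\<forall>a b i j x. (1/2) * (eta i i * pdx i (xi a b j) x + eta j j * pdx j (xi a b i) x) = eta i j * k a b x"
  shows "k a b = pdx 0 (xi a b 0)"
proof (rule ext)
  fix x
  show "k a b x = pdx 0 (xi a b 0) x"
  proof -
    have "(1/2) * (eta 0 0 * pdx 0 (xi a b 0) x + eta 0 0 * pdx 0 (xi a b 0) x) = eta 0 0 * k a b x"
      using kil by blast
    then show ?thesis by (simp add: eta_def)
  qed
qed

lemma kil_d:
  fixes xi :: "'g::finite \<Rightarrow> 'g \<Rightarrow> 4 \<Rightarrow> real^4 \<Rightarrow> real"
  assumes sm: "\<forall>a b j. smooth4 (xi a b j)"
    and kil: "\<forall>a b i j x. (1/2) * (eta i i * pdx i (xi a b j) x + eta j j * pdx j (xi a b i) x) = eta i j * k a b x"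
  shows "eta i i * pdx m (pdx i (xi a b j)) x + eta j j * pdx m (pdx j (xi a b i)) x = 2 * eta i j * pdx m (k a b) x"
proof -
  have gd: "\<forall>y. pdx i' (xi a b j') differentiable at y" for i' j' using sm smooth4_pdx smooth4_diff by blast
  have kd: "\<forall>y. k a b differentiable at y"
    using k_eq[OF kil, of a b] sm smooth4_pdx smooth4_diff by metis
  have D1: "((\<lambda>t. (1/2) * (eta i i * pdx i (xi a b j) (x + t *\<^sub>R axis m 1) + eta j j * pdx j (xi a b i) (x + t *\<^sub>R axis m 1)))
     has_real_derivative (1/2) * (eta i i * pdx m (pdx i (xi a b j)) x + eta j j * pdx m (pdx j (xi a b i)) x)) (at 0)"
    by (intro DERIV_add DERIV_cmult pdx_hasderiv0 gd)
  have D2: "((\<lambda>t. eta i j * k a b (x + t *\<^sub>R axis m 1)) has_real_derivative eta i j * pdx m (k a b) x) (at 0)"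
    by (intro DERIV_cmult pdx_hasderiv0 kd)
  have e: "(\<lambda>t. (1/2) * (eta i i * pdx i (xi a b j) (x + t *\<^sub>R axis m 1) + eta j j * pdx j (xi a b i) (x + t *\<^sub>R axis m 1)))
     = (\<lambda>t. eta i j * k a b (x + t *\<^sub>R axis m 1))"
    using kil by simp
  have "(1/2) * (eta i i * pdx m (pdx i (xi a b j)) x + eta j j * pdx m (pdx j (xi a b i)) x) = eta i j * pdx m (k a b) x"
    using DERIV_unique[OF D1 D2[folded e]] .
  then show ?thesis by simp
qed

lemma covQ1:
  fixes xi :: "'g::finite \<Rightarrow> 'g \<Rightarrow> 4 \<Rightarrow> real^4 \<Rightarrow> real"
  assumes L: "lie_structure c" and sm: "\<forall>a b j. smooth4 (xi a b j)"
    and iw: "\<forall>a g d j x. (\<Sum>b\<in>UNIV. xi a b j x * c b g d) + (\<Sum>b\<in>UNIV. c a b g * xi b d j x) = 0"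
  shows "cov c k (\<lambda>a p. \<Sum>b\<in>UNIV. \<Sum>l\<in>UNIV. xi a b l (xp p) * Fld c b j l p) a p
    = (\<Sum>l\<in>UNIV. (\<Sum>b\<in>UNIV. pdx k (xi a b l) (xp p) * Fld c b j l p) + (\<Sum>b\<in>UNIV. xi a b l (xp p) * cov c k (\<lambda>b. Fld c b j l) b p))"
proof -
  have qe: "(\<lambda>a p. \<Sum>b\<in>UNIV. \<Sum>l\<in>UNIV. xi a b l (xp p) * Fld c b j l p) = (\<lambda>a p. \<Sum>l\<in>UNIV. \<Sum>b\<in>UNIV. xi a b l (xp p) * Fld c b j l p)"
    by (intro ext) (rule sum.swap)
  have n: "(\<lambda>p. \<Sum>b\<in>UNIV. xi a' b l (xp p) * Fld c b j l p) \<in> nf" for a' l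
    using sm by (intro nf_sum nf_mul nf_sm nf_Fld) auto
  have "cov c k (\<lambda>a p. \<Sum>l\<in>UNIV. \<Sum>b\<in>UNIV. xi a b l (xp p) * Fld c b j l p) a p
     = (\<Sum>l\<in>UNIV. cov c k (\<lambda>a p. \<Sum>b\<in>UNIV. xi a b l (xp p) * Fld c b j l p) a p)"
    using n by (intro cov_sum) auto
  also have "\<dots> = (\<Sum>l\<in>UNIV. (\<Sum>b\<in>UNIV. pdx k (xi a b l) (xp p) * Fld c b j l p) + (\<Sum>b\<in>UNIV. xi a b l (xp p) * cov c k (\<lambda>b. Fld c b j l) b p))"
  proof (rule sum.cong[OF refl])
    fix l
    show "cov c k (\<lambda>a p. \<Sum>b\<in>UNIV. xi a b l (xp p) * Fld c b j l p) a p
      = (\<Sum>b\<in>UNIV. pdx k (xi a b l) (xp p) * Fld c b j l p) + (\<Sum>b\<in>UNIV. xi a b l (xp p) * cov c k (\<lambda>b. Fld c b j l) b p)"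
    proof -
      have sm': "\<And>a b. smooth4 (xi a b l)" using sm by blast
      show ?thesis using cov_act[OF L sm' xi_intw[OF iw] nf_Fld, where i=k and a=a] by simp
    qed
  qed
  finally show ?thesis unfolding qe .
qed

lemma covQ2:
  fixes xi :: "'g::finite \<Rightarrow> 'g \<Rightarrow> 4 \<Rightarrow> real^4 \<Rightarrow> real"
  assumes L: "lie_structure c" and sm: "\<forall>a b j. smooth4 (xi a b j)"
    and iw: "\<forall>a g d j x. (\<Sum>b\<in>UNIV. xi a b j x * c b g d) + (\<Sum>b\<in>UNIV. c a b g * xi b d j x) = 0"
  shows "cov c m (cov c k (\<lambda>a p. \<Sum>b\<in>UNIV. \<Sum>l\<in>UNIV. xi a b l (xp p) * Fld c b j l p)) a p
    = (\<Sum>l\<in>UNIV. ((\<Sum>b\<in>UNIV. pdx m (pdx k (xi a b l)) (xp p) * Fld c b j l p) + (\<Sum>b\<in>UNIV. pdx k (xi a b l) (xp p) * cov c m (\<lambda>b. Fld c b j l) b p))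
       + ((\<Sum>b\<in>UNIV. pdx m (xi a b l) (xp p) * cov c k (\<lambda>b. Fld c b j l) b p) + (\<Sum>b\<in>UNIV. xi a b l (xp p) * cov c m (cov c k (\<lambda>b. Fld c b j l)) b p)))"
proof -
  define G1 where "G1 l = (\<lambda>a p. \<Sum>b\<in>UNIV. pdx k (xi a b l) (xp p) * Fld c b j l p)" for l
  define G2 where "G2 l = (\<lambda>a p. \<Sum>b\<in>UNIV. xi a b l (xp p) * cov c k (\<lambda>b. Fld c b j l) b p)" for l
  have ce: "cov c k (\<lambda>a p. \<Sum>b\<in>UNIV. \<Sum>l\<in>UNIV. xi a b l (xp p) * Fld c b j l p) = (\<lambda>a p. \<Sum>l\<in>UNIV. G1 l a p + G2 l a p)"
    unfolding G1_def G2_def by (intro ext) (rule covQ1[OF L sm iw])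
  have smd: "smooth4 (pdx k (xi a' b l))" for a' b l using sm smooth4_pdx by blast
  have n1: "G1 l a' \<in> nf" for l a' unfolding G1_def using smd by (intro nf_sum nf_mul nf_sm nf_Fld) auto
  have n2: "G2 l a' \<in> nf" for l a' unfolding G2_def using sm by (intro nf_sum nf_mul nf_sm nf_cov nf_Fld) auto
  have "cov c m (\<lambda>a p. \<Sum>l\<in>UNIV. G1 l a p + G2 l a p) a p = (\<Sum>l\<in>UNIV. cov c m (\<lambda>a p. G1 l a p + G2 l a p) a p)"
    using n1 n2 by (intro cov_sum nf_add) auto
  also have "\<dots> = (\<Sum>l\<in>UNIV. cov c m (G1 l) a p + cov c m (G2 l) a p)"
    using n1 n2 by (simp add: cov_add)
  also have "\<dots> = (\<Sum>l\<in>UNIV. ((\<Sum>b\<in>UNIV. pdx m (pdx k (xi a b l)) (xp p) * Fld c b j l p) + (\<Sum>b\<in>UNIV. pdx k (xi a b l) (xp p) * cov c m (\<lambda>b. Fld c b j l) b p))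
       + ((\<Sum>b\<in>UNIV. pdx m (xi a b l) (xp p) * cov c k (\<lambda>b. Fld c b j l) b p) + (\<Sum>b\<in>UNIV. xi a b l (xp p) * cov c m (cov c k (\<lambda>b. Fld c b j l)) b p)))"
  proof (rule sum.cong[OF refl])
    fix l
    have 1: "cov c m (G1 l) a p = (\<Sum>b\<in>UNIV. pdx m (pdx k (xi a b l)) (xp p) * Fld c b j l p) + (\<Sum>b\<in>UNIV. pdx k (xi a b l) (xp p) * cov c m (\<lambda>b. Fld c b j l) b p)"
      unfolding G1_def using cov_act[OF L smd xi_intw_d[OF sm iw] nf_Fld, where i=m and a=a] by simp
    have 2: "cov c m (G2 l) a p = (\<Sum>b\<in>UNIV. pdx m (xi a b l) (xp p) * cov c k (\<lambda>b. Fld c b j l) b p) + (\<Sum>b\<in>UNIV. xi a b l (xp p) * cov c m (cov c k (\<lambda>b. Fld c b j l)) b p)"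
    proof -
      have sm': "\<And>a b. smooth4 (xi a b l)" using sm by blast
      have G: "\<And>b. cov c k (\<lambda>b. Fld c b j l) b \<in> nf" by (intro nf_cov nf_Fld)
      show ?thesis unfolding G2_def using cov_act[OF L sm' xi_intw[OF iw] G, where i=m and a=a] by simp
    qed
    show "cov c m (G1 l) a p + cov c m (G2 l) a p = ((\<Sum>b\<in>UNIV. pdx m (pdx k (xi a b l)) (xp p) * Fld c b j l p) + (\<Sum>b\<in>UNIV. pdx k (xi a b l) (xp p) * cov c m (\<lambda>b. Fld c b j l) b p))
       + ((\<Sum>b\<in>UNIV. pdx m (xi a b l) (xp p) * cov c k (\<lambda>b. Fld c b j l) b p) + (\<Sum>b\<in>UNIV. xi a b l (xp p) * cov c m (cov c k (\<lambda>b. Fld c b j l)) b p))"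
      using 1 2 by simp
  qed
  finally show ?thesis unfolding ce .
qed

lemma finite_ord1: "finite {v::'g::finite jvar. vord v \<le> 1}"
proof -
  have sub: "{v::'g jvar. vord v \<le> 1} \<subseteq> range X \<union> (\<lambda>(b,j). A b j {#}) ` UNIV \<union> (\<lambda>(b,j,l). A b j {#l#}) ` UNIV"
  proof
    fix v :: "'g jvar" assume v: "v \<in> {v. vord v \<le> 1}"
    show "v \<in> range X \<union> (\<lambda>(b,j). A b j {#}) ` UNIV \<union> (\<lambda>(b,j,l). A b j {#l#}) ` UNIV"
    proof (cases v)
      case (X l)
      then show ?thesis by auto
    next
      case (A b j J)
      then have s: "size J \<le> 1" using v by simp
      show ?thesis
      proof (cases "size J = 0")
        case True
        then have "J = {#}" by simp
        then have "v = (\<lambda>(b,j). A b j {#}) (b, j)" using A by simp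
        then show ?thesis by blast
      next
        case False
        have "size J = 1" using s False by linarith
        then obtain l where "J = {#l#}" using size_1_singleton_mset by blast
        then have "v = (\<lambda>(b,j,l). A b j {#l#}) (b, j, l)" using A by simp
        then show ?thesis by blast
      qed
    qed
  qed
  show ?thesis by (rule finite_subset[OF sub]) auto
qed

lemma onR_YM0:
  assumes R: "onR c 1 p"
  shows "(\<Sum>j\<in>UNIV. eta j j * cov c j (\<lambda>b. Fld c b i j) a p) = 0"
proof -
  have "covs c [] (YM c i) a p = 0" using R unfolding onR_def by (metis list.size(3) zero_le)
  then show ?thesis by (simp add: YM_def)
qed

lemma onR_YM1:
  assumes R: "onR c 1 p"
  shows "(\<Sum>j\<in>UNIV. eta j j * cov c k (cov c j (\<lambda>b. Fld c b i j)) a p) = 0"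
proof -
  have "covs c [k] (YM c i) a p = 0" using R unfolding onR_def by (metis One_nat_def le_refl list.size(3) list.size(4) add_0)
  then have z: "cov c k (YM c i) a p = 0" by simp
  have ye: "YM c i = (\<lambda>a p. \<Sum>j\<in>UNIV. eta j j * cov c j (\<lambda>b. Fld c b i j) a p)"
    by (intro ext) (simp add: YM_def)
  have n: "(\<lambda>p. eta j j * cov c j (\<lambda>b. Fld c b i j) a' p) \<in> nf" for j a'
    by (intro nf_cmul nf_cov nf_Fld)
  have "cov c k (YM c i) a p = (\<Sum>j\<in>UNIV. cov c k (\<lambda>a p. eta j j * cov c j (\<lambda>b. Fld c b i j) a p) a p)"
    unfolding ye using n by (intro cov_sum) auto
  also have "\<dots> = (\<Sum>j\<in>UNIV. eta j j * cov c k (cov c j (\<lambda>b. Fld c b i j)) a p)"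
    by (rule sum.cong[OF refl]) (intro cov_cmul nf_cov nf_Fld)
  finally show ?thesis using z by simp
qed

lemma antid:
  assumes L: "lie_structure c"
  shows "cov c m (\<lambda>b. Fld c b j l) b p = - cov c m (\<lambda>b. Fld c b l j) b p"
proof -
  have e: "(\<lambda>b. Fld c b j l) = (\<lambda>b p. - Fld c b l j p)"
    by (intro ext) (rule Fld_anti[OF L])
  show ?thesis unfolding e by (intro cov_neg nf_Fld)
qed

lemma antidd:
  assumes L: "lie_structure c"
  shows "cov c m (cov c k (\<lambda>b. Fld c b j l)) b p = - cov c m (cov c k (\<lambda>b. Fld c b l j)) b p"
proof -
  have e: "cov c k (\<lambda>b. Fld c b j l) = (\<lambda>b p. - cov c k (\<lambda>b. Fld c b l j) b p)"
    by (intro ext) (rule antid[OF L])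
  show ?thesis unfolding e by (intro cov_neg nf_cov nf_Fld)
qed

lemma dbianchi:
  assumes L: "lie_structure c"
  shows "cov c m (cov c i (\<lambda>b. Fld c b j k)) a p + cov c m (cov c j (\<lambda>b. Fld c b k i)) a p + cov c m (cov c k (\<lambda>b. Fld c b i j)) a p = 0"
proof -
  have e: "(\<lambda>a p. cov c i (\<lambda>b. Fld c b j k) a p + cov c j (\<lambda>b. Fld c b k i) a p + cov c k (\<lambda>b. Fld c b i j) a p) = (\<lambda>a p. 0)"
    by (intro ext) (rule bianchi[OF L])
  have n: "cov c i' (\<lambda>b. Fld c b j' k') b' \<in> nf" for i' j' k' b' by (intro nf_cov nf_Fld)
  have "cov c m (\<lambda>a p. cov c i (\<lambda>b. Fld c b j k) a p + cov c j (\<lambda>b. Fld c b k i) a p + cov c k (\<lambda>b. Fld c b i j) a p) a p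
     = cov c m (cov c i (\<lambda>b. Fld c b j k)) a p + cov c m (cov c j (\<lambda>b. Fld c b k i)) a p + cov c m (cov c k (\<lambda>b. Fld c b i j)) a p"
    using n by (simp add: cov_add nf_add)
  then show ?thesis unfolding e by (simp add: cov_zero)
qed

lemma regroup:
  fixes f1 f2 f3 f4 g1 g2 g4 :: "'g::finite \<Rightarrow> real"
  shows "((\<Sum>b\<in>UNIV. f1 b) + (\<Sum>b\<in>UNIV. f2 b)) + ((\<Sum>b\<in>UNIV. f3 b) + (\<Sum>b\<in>UNIV. f4 b))
     - (((\<Sum>b\<in>UNIV. g1 b) + (\<Sum>b\<in>UNIV. g2 b)) + ((\<Sum>b\<in>UNIV. g2 b) + (\<Sum>b\<in>UNIV. g4 b)))
     = (\<Sum>b\<in>UNIV. ((f1 b - g1 b) + (f2 b + f3 b - 2 * g2 b)) + (f4 b - g4 b))"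
proof -
  have "(\<Sum>b\<in>UNIV. ((f1 b - g1 b) + (f2 b + f3 b - 2 * g2 b)) + (f4 b - g4 b))
    = ((\<Sum>b\<in>UNIV. f1 b) - (\<Sum>b\<in>UNIV. g1 b)) + ((\<Sum>b\<in>UNIV. f2 b) + (\<Sum>b\<in>UNIV. f3 b) - 2 * (\<Sum>b\<in>UNIV. g2 b)) + ((\<Sum>b\<in>UNIV. f4 b) - (\<Sum>b\<in>UNIV. g4 b))"
    by (simp add: sum.distrib sum_subtractf sum_distrib_left)
  then show ?thesis by simp
qed

theorem proposition2p3:
  fixes c :: "'g::finite \<Rightarrow> 'g \<Rightarrow> 'g \<Rightarrow> real"
    and xi :: "'g \<Rightarrow> 'g \<Rightarrow> 4 \<Rightarrow> real^4 \<Rightarrow> real"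
    and k :: "'g \<Rightarrow> 'g \<Rightarrow> real^4 \<Rightarrow> real"
  assumes "lie_structure c"
    and "\<forall>a b j. smooth4 (xi a b j)"
    and "\<forall>a b i j x. (1/2) * (eta i i * pdx i (xi a b j) x + eta j j * pdx j (xi a b i) x)
                       = eta i j * k a b x"
    and "\<forall>a g d j x. (\<Sum>b\<in>UNIV. xi a b j x * c b g d) + (\<Sum>b\<in>UNIV. c a b g * xi b d j x) = 0"
  shows "gen_symmetry c 1 (\<lambda>i a p. \<Sum>b\<in>UNIV. \<Sum>j\<in>UNIV. xi a b j (\<chi> l. p (X l)) * Fld c b i j p)"
proof -
  note L = assms(1) and sm = assms(2) and kil = assms(3) and iw = assms(4)
  define Q where "Q = (\<lambda>i a p. \<Sum>b\<in>UNIV. \<Sum>j\<in>UNIV. xi a b j (xp p) * Fld c b i j p)"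
  have part1: "diff_fun 1 (Q i a)" for i a
  proof -
    have nf: "Q i a \<in> nf" unfolding Q_def using sm by (intro nf_sum nf_mul nf_sm nf_Fld) auto
    have dep: "Q i a p = Q i a q" if agree: "\<forall>v\<in>{v. vord v \<le> 1}. p v = q v" for p q
    proof -
      have ag: "\<And>v. vord v \<le> 1 \<Longrightarrow> p v = q v" using agree by simp
      have x: "xp p = xp q" using ag by (simp add: vec_eq_iff)
      have f: "Fld c b i j p = Fld c b i j q" for b j using ag by (simp add: Fld_def)
      show ?thesis unfolding Q_def using x f by simp
    qed
    show ?thesis unfolding diff_fun_def using finite_ord1 dep nf_smooth[OF nf] by blast
  qed
  have part2: "(\<Sum>j\<in>UNIV. eta j j * (cov c j (cov c i (Q j)) a p - cov c j (cov c j (Q i)) a p))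
        - (\<Sum>j\<in>UNIV. \<Sum>b\<in>UNIV. \<Sum>d\<in>UNIV. c a b d * (eta j j * Fld c b i j p) * Q j d p) = 0"
    if R: "onR c 1 p" for p i a
  proof -
    define x where "x = xp p"
    define F where "F j l b = Fld c b j l p" for j l b
    define d where "d m j l b = cov c m (\<lambda>b. Fld c b j l) b p" for m j l b
    define dd where "dd m k' j l b = cov c m (cov c k' (\<lambda>b. Fld c b j l)) b p" for m k' j l b
    define V where "V m k' l b = pdx m (pdx k' (xi a b l)) x" for m k' l b
    define W where "W k' l b = pdx k' (xi a b l) x" for k' l b
    define Xm where "Xm l = (\<lambda>a' b. xi a' b l x)" for l
    define zo where "zo j l b = (V j i l b * F j l b - V j j l b * F i l b)
        + (W i l b * d j j l b + W j l b * d i j l b - 2 * (W j l b * d j i l b))" for j l b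
    have hA: "cov c j (cov c i (Q j)) a p = (\<Sum>l\<in>UNIV. ((\<Sum>b\<in>UNIV. V j i l b * F j l b) + (\<Sum>b\<in>UNIV. W i l b * d j j l b))
         + ((\<Sum>b\<in>UNIV. W j l b * d i j l b) + (\<Sum>b\<in>UNIV. xi a b l x * dd j i j l b)))" for j
      unfolding Q_def V_def W_def F_def d_def dd_def x_def by (rule covQ2[OF L sm iw])
    have hB: "cov c j (cov c j (Q i)) a p = (\<Sum>l\<in>UNIV. ((\<Sum>b\<in>UNIV. V j j l b * F i l b) + (\<Sum>b\<in>UNIV. W j l b * d j i l b))
         + ((\<Sum>b\<in>UNIV. W j l b * d j i l b) + (\<Sum>b\<in>UNIV. xi a b l x * dd j j i l b)))" for j
      unfolding Q_def V_def W_def F_def d_def dd_def x_def by (rule covQ2[OF L sm iw])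
    have hAB: "cov c j (cov c i (Q j)) a p - cov c j (cov c j (Q i)) a p
        = (\<Sum>l\<in>UNIV. \<Sum>b\<in>UNIV. zo j l b + xi a b l x * (dd j i j l b - dd j j i l b))" for j
    proof -
      have "cov c j (cov c i (Q j)) a p - cov c j (cov c j (Q i)) a p
        = (\<Sum>l\<in>UNIV. (((\<Sum>b\<in>UNIV. V j i l b * F j l b) + (\<Sum>b\<in>UNIV. W i l b * d j j l b))
         + ((\<Sum>b\<in>UNIV. W j l b * d i j l b) + (\<Sum>b\<in>UNIV. xi a b l x * dd j i j l b)))
         - (((\<Sum>b\<in>UNIV. V j j l b * F i l b) + (\<Sum>b\<in>UNIV. W j l b * d j i l b))
         + ((\<Sum>b\<in>UNIV. W j l b * d j i l b) + (\<Sum>b\<in>UNIV. xi a b l x * dd j j i l b))))"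
        unfolding hA hB by (rule sum_subtractf[symmetric])
      also have "\<dots> = (\<Sum>l\<in>UNIV. \<Sum>b\<in>UNIV. zo j l b + xi a b l x * (dd j i j l b - dd j j i l b))"
      proof (rule sum.cong[OF refl])
        fix l
        show "(((\<Sum>b\<in>UNIV. V j i l b * F j l b) + (\<Sum>b\<in>UNIV. W i l b * d j j l b))
         + ((\<Sum>b\<in>UNIV. W j l b * d i j l b) + (\<Sum>b\<in>UNIV. xi a b l x * dd j i j l b)))
         - (((\<Sum>b\<in>UNIV. V j j l b * F i l b) + (\<Sum>b\<in>UNIV. W j l b * d j i l b))
         + ((\<Sum>b\<in>UNIV. W j l b * d j i l b) + (\<Sum>b\<in>UNIV. xi a b l x * dd j j i l b)))
         = (\<Sum>b\<in>UNIV. zo j l b + xi a b l x * (dd j i j l b - dd j j i l b))"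
          unfolding regroup zo_def by (simp add: right_diff_distrib)
      qed
      finally show ?thesis .
    qed
    have PB: "(\<Sum>j\<in>UNIV. eta j j * (\<Sum>l\<in>UNIV. zo j l b)) = 0" for b
    proof -
      have Zs: "(\<Sum>j\<in>UNIV. eta j j * (\<Sum>l\<in>UNIV. V j i l b * F j l b - V j j l b * F i l b)) = 0"
      proof (rule Z_scalar[where V="\<lambda>m k' l. V m k' l b" and L="\<lambda>m. pdx m (k a b) x" and F="\<lambda>j l. F j l b" and i=i])
        show "\<And>m k' l. V m k' l b = V k' m l b" unfolding V_def using sm by (intro clairaut) blast
        show "\<And>m k' l. eta k' k' * V m k' l b + eta l l * V m l k' b = 2 * eta k' l * pdx m (k a b) x"
          unfolding V_def by (rule kil_d[OF sm kil])
        show "\<And>j l. F j l b = - F l j b" unfolding F_def by (rule Fld_anti[OF L])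
      qed
      have Os: "(\<Sum>j\<in>UNIV. eta j j * (\<Sum>l\<in>UNIV. W i l b * d j j l b + W j l b * d i j l b - 2 * (W j l b * d j i l b))) = 0"
      proof (rule O_scalar[where w="\<lambda>j l. W j l b" and \<kappa>="k a b x" and D="\<lambda>m j l. d m j l b" and i=i])
        show "\<And>j l. eta j j * W j l b + eta l l * W l j b = 2 * eta j l * k a b x"
        proof -
          fix j l
          have "(1/2) * (eta j j * pdx j (xi a b l) x + eta l l * pdx l (xi a b j) x) = eta j l * k a b x"
            using kil by blast
          then show "eta j j * W j l b + eta l l * W l j b = 2 * eta j l * k a b x" unfolding W_def by simp
        qed
        show "\<And>m j l. d m j l b = - d m l j b" unfolding d_def by (rule antid[OF L])
        show "\<And>i j k. d i j k b + d j k i b + d k i j b = 0" unfolding d_def by (rule bianchi[OF L])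
        show "\<And>i. (\<Sum>j\<in>UNIV. eta j j * d j i j b) = 0" unfolding d_def by (rule onR_YM0[OF R])
      qed
      have "(\<Sum>j\<in>UNIV. eta j j * (\<Sum>l\<in>UNIV. zo j l b))
        = (\<Sum>j\<in>UNIV. eta j j * (\<Sum>l\<in>UNIV. V j i l b * F j l b - V j j l b * F i l b))
        + (\<Sum>j\<in>UNIV. eta j j * (\<Sum>l\<in>UNIV. W i l b * d j j l b + W j l b * d i j l b - 2 * (W j l b * d j i l b)))"
        unfolding zo_def by (simp add: sum.distrib distrib_left)
      then show ?thesis using Zs Os by simp
    qed
    have XV: "(\<Sum>j\<in>UNIV. eta j j * (dd j i j l b - dd j j i l b)) = - (\<Sum>j\<in>UNIV. eta j j * vb c (F j l) (F i j) b)" for l b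
    proof -
      have pj: "dd j i j l b - dd j j i l b = - dd l j i j b - vb c (F j l) (F i j) b" for j
      proof -
        have db: "dd j j i l b + dd j i l j b + dd j l j i b = 0"
          unfolding dd_def by (rule dbianchi[OF L])
        have a1: "dd j i l j b = - dd j i j l b" unfolding dd_def by (rule antidd[OF L])
        have a2: "dd j l j i b = - dd j l i j b" unfolding dd_def by (rule antidd[OF L])
        have cm: "dd j l i j b - dd l j i j b = vb c (F j l) (F i j) b"
        proof -
          have fe: "F j l = (\<lambda>b. Fld c b j l p)" "F i j = (\<lambda>b. Fld c b i j p)" by (intro ext, simp add: F_def)+
          show ?thesis unfolding dd_def fe by (rule cov_comm[OF L pnf_Fld])
        qed
        show ?thesis using db a1 a2 cm by linarith
      qed
      have y: "(\<Sum>j\<in>UNIV. eta j j * dd l j i j b) = 0" unfolding dd_def by (rule onR_YM1[OF R])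
      have "(\<Sum>j\<in>UNIV. eta j j * (dd j i j l b - dd j j i l b)) = (\<Sum>j\<in>UNIV. - (eta j j * dd l j i j b) - eta j j * vb c (F j l) (F i j) b)"
        by (rule sum.cong[OF refl]) (simp add: pj algebra_simps)
      also have "\<dots> = - (\<Sum>j\<in>UNIV. eta j j * dd l j i j b) - (\<Sum>j\<in>UNIV. eta j j * vb c (F j l) (F i j) b)"
        by (simp add: sum_subtractf sum_negf)
      finally show ?thesis using y by simp
    qed
    define M where "M l j = mv (Xm l) (vb c (F j l) (F i j)) a" for l j
    have S1: "(\<Sum>j\<in>UNIV. eta j j * (cov c j (cov c i (Q j)) a p - cov c j (cov c j (Q i)) a p))
      = (\<Sum>j\<in>UNIV. eta j j * (\<Sum>l\<in>UNIV. \<Sum>b\<in>UNIV. zo j l b)) + (\<Sum>j\<in>UNIV. eta j j * (\<Sum>l\<in>UNIV. \<Sum>b\<in>UNIV. xi a b l x * (dd j i j l b - dd j j i l b)))"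
      unfolding hAB by (simp add: sum.distrib distrib_left)
    have S2: "(\<Sum>j\<in>UNIV. eta j j * (\<Sum>l\<in>UNIV. \<Sum>b\<in>UNIV. zo j l b)) = 0"
    proof -
      have "(\<Sum>j\<in>UNIV. eta j j * (\<Sum>l\<in>UNIV. \<Sum>b\<in>UNIV. zo j l b)) = (\<Sum>j\<in>UNIV. \<Sum>l\<in>UNIV. \<Sum>b\<in>UNIV. eta j j * zo j l b)"
        by (simp add: sum_distrib_left)
      also have "\<dots> = (\<Sum>b\<in>UNIV. \<Sum>j\<in>UNIV. \<Sum>l\<in>UNIV. eta j j * zo j l b)"
        by (rule sum_rot3[symmetric])
      also have "\<dots> = (\<Sum>b\<in>UNIV. \<Sum>j\<in>UNIV. eta j j * (\<Sum>l\<in>UNIV. zo j l b))"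
        by (simp add: sum_distrib_left)
      also have "\<dots> = 0" using PB by simp
      finally show ?thesis .
    qed
    have S3: "(\<Sum>j\<in>UNIV. eta j j * (\<Sum>l\<in>UNIV. \<Sum>b\<in>UNIV. xi a b l x * (dd j i j l b - dd j j i l b)))
       = (\<Sum>l\<in>UNIV. - (\<Sum>j\<in>UNIV. eta j j * M l j))"
    proof -
      have "(\<Sum>j\<in>UNIV. eta j j * (\<Sum>l\<in>UNIV. \<Sum>b\<in>UNIV. xi a b l x * (dd j i j l b - dd j j i l b)))
        = (\<Sum>j\<in>UNIV. \<Sum>l\<in>UNIV. \<Sum>b\<in>UNIV. eta j j * (xi a b l x * (dd j i j l b - dd j j i l b)))"
        by (simp add: sum_distrib_left)
      also have "\<dots> = (\<Sum>l\<in>UNIV. \<Sum>b\<in>UNIV. \<Sum>j\<in>UNIV. eta j j * (xi a b l x * (dd j i j l b - dd j j i l b)))"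
        by (rule sum_rot3)
      also have "\<dots> = (\<Sum>l\<in>UNIV. \<Sum>b\<in>UNIV. xi a b l x * (\<Sum>j\<in>UNIV. eta j j * (dd j i j l b - dd j j i l b)))"
        by (simp add: sum_distrib_left mult.left_commute)
      also have "\<dots> = (\<Sum>l\<in>UNIV. \<Sum>b\<in>UNIV. xi a b l x * (- (\<Sum>j\<in>UNIV. eta j j * vb c (F j l) (F i j) b)))"
        by (simp only: XV)
      also have "\<dots> = (\<Sum>l\<in>UNIV. mv (Xm l) (\<lambda>b. - (\<Sum>j\<in>UNIV. eta j j * vb c (F j l) (F i j) b)) a)"
        by (simp add: mv_def Xm_def)
      also have "\<dots> = (\<Sum>l\<in>UNIV. - (\<Sum>j\<in>UNIV. eta j j * M l j))"
        by (simp add: mv_neg mv_sum mv_cmul M_def)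
      finally show ?thesis .
    qed
    have S4: "(\<Sum>j\<in>UNIV. \<Sum>b\<in>UNIV. \<Sum>d\<in>UNIV. c a b d * (eta j j * Fld c b i j p) * Q j d p)
       = (\<Sum>j\<in>UNIV. eta j j * (\<Sum>l\<in>UNIV. - M l j))"
    proof (rule sum.cong[OF refl])
      fix j
      have hQ: "(\<lambda>d. Q j d p) = (\<lambda>d. \<Sum>l\<in>UNIV. mv (Xm l) (F j l) d)"
        by (intro ext) (unfold Q_def mv_def Xm_def F_def x_def, rule sum.swap)
      have e1: "(\<Sum>b\<in>UNIV. \<Sum>d\<in>UNIV. c a b d * (eta j j * Fld c b i j p) * Q j d p) = eta j j * vb c (F i j) (\<lambda>d. Q j d p) a"
        by (simp add: vb_def F_def sum_distrib_left mult_ac)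
      have e2: "vb c (F i j) (\<lambda>d. \<Sum>l\<in>UNIV. mv (Xm l) (F j l) d) a = (\<Sum>l\<in>UNIV. vb c (F i j) (mv (Xm l) (F j l)) a)"
        by (rule vb_sumR)
      have e3: "vb c (F i j) (mv (Xm l) (F j l)) a = - M l j" for l
      proof -
        have "vb c (F i j) (mv (Xm l) (F j l)) a = mv (Xm l) (vb c (F i j) (F j l)) a"
          unfolding Xm_def by (rule mv_vb[OF L xi_intw[OF iw], symmetric])
        also have "\<dots> = mv (Xm l) (\<lambda>b. - vb c (F j l) (F i j) b) a"
          by (rule arg_cong[where f="\<lambda>w. mv (Xm l) w a"]) (rule ext, rule vb_antisym[OF L])
        also have "\<dots> = - M l j" by (simp add: mv_neg M_def)
        finally show ?thesis .
      qed
      show "(\<Sum>b\<in>UNIV. \<Sum>d\<in>UNIV. c a b d * (eta j j * Fld c b i j p) * Q j d p) = eta j j * (\<Sum>l\<in>UNIV. - M l j)"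
        unfolding e1 hQ e2 e3 ..
    qed
    have S5: "(\<Sum>l\<in>UNIV. - (\<Sum>j\<in>UNIV. eta j j * M l j)) - (\<Sum>j\<in>UNIV. eta j j * (\<Sum>l\<in>UNIV. - M l j)) = 0"
    proof -
      have "(\<Sum>j\<in>UNIV. eta j j * (\<Sum>l\<in>UNIV. - M l j)) = (\<Sum>j\<in>UNIV. \<Sum>l\<in>UNIV. - (eta j j * M l j))"
        by (simp add: sum_distrib_left)
      also have "\<dots> = (\<Sum>l\<in>UNIV. \<Sum>j\<in>UNIV. - (eta j j * M l j))" by (rule sum.swap)
      also have "\<dots> = (\<Sum>l\<in>UNIV. - (\<Sum>j\<in>UNIV. eta j j * M l j))" by (simp add: sum_negf)
      finally show ?thesis by simp
    qed
    show ?thesis using S1 S2 S3 S4 S5 by simp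
  qed
  have "gen_symmetry c 1 Q"
    unfolding gen_symmetry_def using part1 part2 by blast
  then show ?thesis unfolding Q_def .
qed

end
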